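(* Let $n\ge 2$, $L>0$, $T>0$, let $b_{ij}$ ($i\neq j$) be real numbers, and let $P=(P_1,\dots,P_n)$, $V=(V_1,\dots,V_n)$ with $P_i,V_i\in C^3([0,T]\times\mathbb T_L)$, $\mathbb T_L=\mathbb R/L\mathbb Z$, be a solution of $$\partial_tP_i+\partial_x(P_iV_i)=0,\qquad -\sum_{j=1}^nb_{ij}P_j(V_i-V_j)=\partial_x\log P_i-\frac{1}{\sum_{j=1}^nP_j}\sum_{j=1}^nP_j\partial_x\log P_j,\qquad \sum_{j=1}^nP_jV_j=0,$$ $i=1,\dots,n$, with $P_i(x,t)>0$ for all $x,t$ and $i$, and with $\sum_{j=1}^nP_j(x,0)=1$ for all $x$. For $N\ge1$, $h=L/N$, $\Delta t>0$ and $k\ge0$ with $(k+1)\Delta t\le T$, set $P^k_{i,\ell}=P_i(\ell h,k\Delta t)$ (cell-centered) and $V^{k}_{i,\ell+\frac12}=V_i((\ell+\frac12)h,k\Delta t)$ (edge-centered), and define the local truncation errors $$\tau^1_{i,\ell}=\frac{P^{k+1}_{i,\ell}-P^k_{i,\ell}}{\Delta t}+\big(d_h(\hat P^k_iV^{k+1}_i)\big)_\ell,$$ $$\tau^2_{i,\ell+\frac12}=\Big(D_h\log P^{k+1}_i-\frac{1}{\sum_{j=1}^n\hat P^k_j}\sum_{j=1}^n\hat P^k_jD_h\log P^{k+1}_j+\sum_{j=1}^nb_{ij}\hat P^k_j(V^{k+1}_i-V^{k+1}_j)\Big)_{\ell+\frac12},$$ $$\tau^3_{\ell+\frac12}=\sum_{i=1}^n\hat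 P^k_{i,\ell+\frac12}V^{k+1}_{i,\ell+\frac12}.$$ Then there is a constant $C>0$ depending on $(P,V)$ (but not on $h$, $\Delta t$, $k$, $i$, $\ell$) such that $$|\tau^1_{i,\ell}|,\ |\tau^2_{i,\ell+\frac12}|,\ |\tau^3_{\ell+\frac12}|\le C(\Delta t+h^2).$$
   Context: Difference operators on $N$-periodic grids: for edge-centered $\phi$, $(d_h\phi)_\ell=(\phi_{\ell+\frac12}-\phi_{\ell-\frac12})/h$; for cell-centered $f$, $(D_hf)_{\ell+\frac12}=(f_{\ell+1}-f_\ell)/h$ and $\hat f_{\ell+\frac12}=(f_\ell+f_{\ell+1})/2$. Products and logarithms are pointwise. *)

theory Defs
  imports "HOL-Analysis.Analysis"
begin

text \<open>Functions of (x,t) are represented as maps real \<times> real \<Rightarrow> real on the domain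
  S = \<real> \<times> [0,T]; periodicity in x with period L encodes the torus.\<close>

definition dom_T :: "real \<Rightarrow> (real \<times> real) set" where
  "dom_T T = UNIV \<times> {0..T}"

text \<open>Partial derivatives (within S, i.e. one-sided at t = 0 and t = T).\<close>
definition pdx :: "(real \<times> real) set \<Rightarrow> (real \<times> real \<Rightarrow> real) \<Rightarrow> real \<times> real \<Rightarrow> real" where
  "pdx S f z = frechet_derivative f (at z within S) (1, 0)"

definition pdt :: "(real \<times> real) set \<Rightarrow> (real \<times> real \<Rightarrow> real) \<Rightarrow> real \<times> real \<Rightarrow> real" where
  "pdt S f z = frechet_derivative f (at z within S) (0, 1)"

fun Ck_on :: "nat \<Rightarrow> (real \<times> real) set \<Rightarrow> (real \<times> real \<Rightarrow> real) \<Rightarrow> bool" where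
  "Ck_on 0 S f = continuous_on S f"
| "Ck_on (Suc k) S f = (continuous_on S f \<and> (\<forall>z\<in>S. f differentiable (at z within S))
      \<and> Ck_on k S (pdx S f) \<and> Ck_on k S (pdt S f))"

definition x_periodic :: "real \<Rightarrow> (real \<times> real \<Rightarrow> real) \<Rightarrow> bool" where
  "x_periodic L f = (\<forall>x t. f (x + L, t) = f (x, t))"

text \<open>Grid quantities. Cell-centered index l means position l*h; edge index l means
  position (l+1/2)*h (i.e. edge l+1/2). Indices i,j range over {0..<n}.\<close>

definition Pgrid :: "(nat \<Rightarrow> real \<times> real \<Rightarrow> real) \<Rightarrow> real \<Rightarrow> real \<Rightarrow> nat \<Rightarrow> nat \<Rightarrow> int \<Rightarrow> real" where
  "Pgrid P h dt k i l = P i (real_of_int l * h, real k * dt)"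

definition Vgrid :: "(nat \<Rightarrow> real \<times> real \<Rightarrow> real) \<Rightarrow> real \<Rightarrow> real \<Rightarrow> nat \<Rightarrow> nat \<Rightarrow> int \<Rightarrow> real" where
  "Vgrid V h dt k i l = V i ((real_of_int l + 1/2) * h, real k * dt)"

definition hatP :: "(nat \<Rightarrow> real \<times> real \<Rightarrow> real) \<Rightarrow> real \<Rightarrow> real \<Rightarrow> nat \<Rightarrow> nat \<Rightarrow> int \<Rightarrow> real" where
  "hatP P h dt k i l = (Pgrid P h dt k i l + Pgrid P h dt k i (l + 1)) / 2"

definition DlogP :: "(nat \<Rightarrow> real \<times> real \<Rightarrow> real) \<Rightarrow> real \<Rightarrow> real \<Rightarrow> nat \<Rightarrow> nat \<Rightarrow> int \<Rightarrow> real" where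
  "DlogP P h dt k i l = (ln (Pgrid P h dt (k+1) i (l + 1)) - ln (Pgrid P h dt (k+1) i l)) / h"

definition tau1 :: "(nat \<Rightarrow> real \<times> real \<Rightarrow> real) \<Rightarrow> (nat \<Rightarrow> real \<times> real \<Rightarrow> real) \<Rightarrow>
    real \<Rightarrow> real \<Rightarrow> nat \<Rightarrow> nat \<Rightarrow> int \<Rightarrow> real" where
  "tau1 P V h dt k i l =
     (Pgrid P h dt (k+1) i l - Pgrid P h dt k i l) / dt
     + (hatP P h dt k i l * Vgrid V h dt (k+1) i l
        - hatP P h dt k i (l - 1) * Vgrid V h dt (k+1) i (l - 1)) / h"

definition tau2 :: "nat \<Rightarrow> (nat \<Rightarrow> nat \<Rightarrow> real) \<Rightarrow> (nat \<Rightarrow> real \<times> real \<Rightarrow> real) \<Rightarrow>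
    (nat \<Rightarrow> real \<times> real \<Rightarrow> real) \<Rightarrow> real \<Rightarrow> real \<Rightarrow> nat \<Rightarrow> nat \<Rightarrow> int \<Rightarrow> real" where
  "tau2 n b P V h dt k i l =
     DlogP P h dt k i l
     - (1 / (\<Sum>j<n. hatP P h dt k j l)) * (\<Sum>j<n. hatP P h dt k j l * DlogP P h dt k j l)
     + (\<Sum>j<n. b i j * hatP P h dt k j l * (Vgrid V h dt (k+1) i l - Vgrid V h dt (k+1) j l))"

definition tau3 :: "nat \<Rightarrow> (nat \<Rightarrow> real \<times> real \<Rightarrow> real) \<Rightarrow> (nat \<Rightarrow> real \<times> real \<Rightarrow> real) \<Rightarrow>
    real \<Rightarrow> real \<Rightarrow> nat \<Rightarrow> int \<Rightarrow> real" where
  "tau3 n P V h dt k l = (\<Sum>i<n. hatP P h dt k i l * Vgrid V h dt (k+1) i l)"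

end

theory Submission
  imports Defs
begin


definition Big :: "'p set \<Rightarrow> ('p \<Rightarrow> real) \<Rightarrow> ('p \<Rightarrow> real) \<Rightarrow> bool" where
  "Big A g E \<longleftrightarrow> (\<exists>C. \<forall>p\<in>A. \<bar>E p\<bar> \<le> C * g p)"

abbreviation Bd where "Bd A E \<equiv> Big A (\<lambda>_. 1) E"

lemma BigI: "(\<And>p. p \<in> A \<Longrightarrow> \<bar>E p\<bar> \<le> C * g p) \<Longrightarrow> Big A g E"
  unfolding Big_def by blast

lemma BdI: "(\<And>p. p \<in> A \<Longrightarrow> \<bar>E p\<bar> \<le> B) \<Longrightarrow> Bd A E"
  unfolding Big_def by (rule exI[of _ B]) simp

lemma Big_add: "Big A g E \<Longrightarrow> Big A g F \<Longrightarrow> Big A g (\<lambda>p. E p + F p)"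
  unfolding Big_def
proof (elim exE)
  fix C D assume c: "\<forall>p\<in>A. \<bar>E p\<bar> \<le> C * g p" and d: "\<forall>p\<in>A. \<bar>F p\<bar> \<le> D * g p"
  show "\<exists>C. \<forall>p\<in>A. \<bar>E p + F p\<bar> \<le> C * g p"
  proof (rule exI[of _ "C + D"], intro ballI)
    fix p assume p: "p \<in> A"
    have "\<bar>E p\<bar> \<le> C * g p" "\<bar>F p\<bar> \<le> D * g p" using c d p by auto
    then show "\<bar>E p + F p\<bar> \<le> (C + D) * g p" by (simp add: distrib_right abs_triangle_ineq add_mono order.trans[OF abs_triangle_ineq])
  qed
qed

lemma Big_uminus: "Big A g E \<Longrightarrow> Big A g (\<lambda>p. - E p)"
  unfolding Big_def by simp

lemma Big_diff: "Big A g E \<Longrightarrow> Big A g F \<Longrightarrow> Big A g (\<lambda>p. E p - F p)"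
  using Big_add[of A g E "\<lambda>p. - F p"] Big_uminus[of A g F] by simp

lemma Big_mult: "Big A g E \<Longrightarrow> Big A g' F \<Longrightarrow> Big A (\<lambda>p. g p * g' p) (\<lambda>p. E p * F p)"
  unfolding Big_def
proof (elim exE)
  fix C D assume c: "\<forall>p\<in>A. \<bar>E p\<bar> \<le> C * g p" and d: "\<forall>p\<in>A. \<bar>F p\<bar> \<le> D * g' p"
  show "\<exists>C. \<forall>p\<in>A. \<bar>E p * F p\<bar> \<le> C * (g p * g' p)"
  proof (rule exI[of _ "C * D"], intro ballI)
    fix p assume p: "p \<in> A"
    have "\<bar>E p * F p\<bar> = \<bar>E p\<bar> * \<bar>F p\<bar>" by (simp add: abs_mult)
    also have "\<dots> \<le> (C * g p) * (D * g' p)"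
      using c d p by (intro mult_mono) auto
    finally show "\<bar>E p * F p\<bar> \<le> C * D * (g p * g' p)" by (simp add: algebra_simps)
  qed
qed

lemma Big_mono: "Big A g E \<Longrightarrow> (\<And>p. p \<in> A \<Longrightarrow> 0 \<le> g p \<and> g p \<le> c * g' p) \<Longrightarrow> Big A g' E"
  unfolding Big_def
proof (elim exE)
  fix C assume c: "\<forall>p\<in>A. \<bar>E p\<bar> \<le> C * g p" and m: "\<And>p. p \<in> A \<Longrightarrow> 0 \<le> g p \<and> g p \<le> c * g' p"
  show "\<exists>C. \<forall>p\<in>A. \<bar>E p\<bar> \<le> C * g' p"
  proof (rule exI[of _ "max C 0 * c"], intro ballI)
    fix p assume p: "p \<in> A"
    have "\<bar>E p\<bar> \<le> C * g p" using c p by auto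
    also have "\<dots> \<le> max C 0 * g p" using m[OF p] by (intro mult_right_mono) auto
    also have "\<dots> \<le> max C 0 * (c * g' p)" using m[OF p] by (intro mult_left_mono) auto
    finally show "\<bar>E p\<bar> \<le> max C 0 * c * g' p" by (simp add: algebra_simps)
  qed
qed

lemma Big_cong: "Big A g E \<Longrightarrow> (\<And>p. p \<in> A \<Longrightarrow> E p = F p) \<Longrightarrow> Big A g F"
  unfolding Big_def by auto

lemma Big_zero: "Big A g (\<lambda>p. 0)"
  unfolding Big_def by (rule exI[of _ 0]) simp

lemma Big_sum: "finite J \<Longrightarrow> (\<And>j. j \<in> J \<Longrightarrow> Big A g (E j)) \<Longrightarrow> Big A g (\<lambda>p. \<Sum>j\<in>J. E j p)"
proof (induction J rule: finite_induct)
  case empty then show ?case by (simp add: Big_zero)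
next
  case (insert x F)
  then show ?case by (simp add: Big_add)
qed

lemma Big_div: "Big A (\<lambda>p. g p * g' p) E \<Longrightarrow> (\<And>p. p \<in> A \<Longrightarrow> g' p > 0) \<Longrightarrow> Big A g (\<lambda>p. E p / g' p)"
  unfolding Big_def
proof (elim exE)
  fix C assume c: "\<forall>p\<in>A. \<bar>E p\<bar> \<le> C * (g p * g' p)" and m: "\<And>p. p \<in> A \<Longrightarrow> g' p > 0"
  show "\<exists>C. \<forall>p\<in>A. \<bar>E p / g' p\<bar> \<le> C * g p"
  proof (rule exI[of _ C], intro ballI)
    fix p assume p: "p \<in> A"
    have "\<bar>E p / g' p\<bar> = \<bar>E p\<bar> / g' p" using m[OF p] by simp
    also have "\<dots> \<le> C * (g p * g' p) / g' p" using c p m[OF p] by (intro divide_right_mono) auto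
    also have "\<dots> = C * g p" using m[OF p] by simp
    finally show "\<bar>E p / g' p\<bar> \<le> C * g p" .
  qed
qed

lemma Big_mult_Bd: "Big A g E \<Longrightarrow> Bd A F \<Longrightarrow> Big A g (\<lambda>p. E p * F p)"
  using Big_mult[of A g E "\<lambda>_. 1" F] by simp

lemma Bd_mult_Big: "Bd A F \<Longrightarrow> Big A g E \<Longrightarrow> Big A g (\<lambda>p. F p * E p)"
  using Big_mult[of A "\<lambda>_. 1" F g E] by simp

lemma Bd_const: "Bd A (\<lambda>p. c)"
  by (rule BdI[of _ _ "\<bar>c\<bar>"]) simp

lemma Big_inverse_diff:
  assumes "Big A g (\<lambda>p. E p - F p)" "Bd A (\<lambda>p. 1 / E p)" "Bd A (\<lambda>p. 1 / F p)"
    "\<And>p. p \<in> A \<Longrightarrow> E p \<noteq> 0 \<and> F p \<noteq> 0"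
  shows "Big A g (\<lambda>p. 1 / E p - 1 / F p)"
proof -
  have "Big A g (\<lambda>p. (- (E p - F p)) * (1 / E p) * (1 / F p))"
    by (intro Big_mult_Bd Big_uminus assms)
  then show ?thesis by (rule Big_cong) (use assms(4) in \<open>auto simp: field_simps\<close>)
qed


lemma dom_T_mem: "(x, t) \<in> dom_T T \<longleftrightarrow> t \<in> {0..T}"
  by (simp add: dom_T_def)

lemma frechet_unique_dom:
  assumes T: "T > 0" and z: "z \<in> dom_T T" and d: "(f has_derivative D) (at z within dom_T T)"
  shows "frechet_derivative f (at z within dom_T T) = D"
proof -
  have dd: "f differentiable (at z within dom_T T)" using d by (auto simp: differentiable_def)
  show ?thesis
  proof (rule frechet_derivative_unique_within[OF frechet_derivative_works[THEN iffD1, OF dd] d])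
    fix i :: "real \<times> real" and e :: real assume i: "i \<in> Basis" and e: "e > 0"
    obtain x t where zt: "z = (x, t)" by (cases z)
    have t: "0 \<le> t" "t \<le> T" using z zt by (auto simp: dom_T_def)
    from i have "i = (1, 0) \<or> i = (0, 1)" by (auto simp: Basis_prod_def)
    then show "\<exists>d. 0 < \<bar>d\<bar> \<and> \<bar>d\<bar> < e \<and> z + d *\<^sub>R i \<in> dom_T T"
    proof
      assume "i = (1, 0)"
      then show ?thesis using z e by (intro exI[of _ "e/2"]) (auto simp: dom_T_def zt)
    next
      assume i01: "i = (0, 1)"
      define d where "d = min (e/2) (T/2)"
      have dp: "0 < d" "d < e" "d \<le> T/2" using e T by (auto simp: d_def)
      show ?thesis
      proof (cases "t \<le> T/2")
        case True
        then show ?thesis using dp t by (intro exI[of _ d]) (auto simp: dom_T_def zt i01)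
      next
        case False
        then show ?thesis using dp t by (intro exI[of _ "-d"]) (auto simp: dom_T_def zt i01)
      qed
    qed
  qed
qed

lemma pdx_deriv:
  assumes dif: "f differentiable (at (s, t) within dom_T T)" and t: "t \<in> {0..T}"
  shows "((\<lambda>s. f (s, t)) has_real_derivative pdx (dom_T T) f (s, t)) (at s)"
proof -
  let ?S = "dom_T T"
  let ?D = "frechet_derivative f (at (s, t) within ?S)"
  have fd: "(f has_derivative ?D) (at (s, t) within ?S)"
    using dif frechet_derivative_works by blast
  have lin: "linear ?D" using fd has_derivative_linear by blast
  have g: "((\<lambda>u. (u, t)) has_derivative (\<lambda>u. (u, 0))) (at s)"
    by (auto intro!: derivative_eq_intros)
  have im: "(\<lambda>u. (u, t)) ` UNIV \<subseteq> ?S" using t by (auto simp: dom_T_def)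
  have fd2: "(f has_derivative ?D) (at ((\<lambda>u. (u, t)) s) within (\<lambda>u. (u, t)) ` UNIV)"
    using has_derivative_subset[OF fd im] by simp
  have "((f \<circ> (\<lambda>u. (u, t))) has_derivative (?D \<circ> (\<lambda>u. (u, 0)))) (at s)"
    using diff_chain_within[OF g fd2] by simp
  moreover have "(?D \<circ> (\<lambda>u. (u, 0))) = (\<lambda>u. pdx ?S f (s, t) * u)"
  proof
    fix u :: real
    have "(u, 0::real) = u *\<^sub>R (1, 0)" by simp
    then have "?D (u, 0) = u *\<^sub>R ?D (1, 0)" using linear_scale[OF lin] by metis
    then show "(?D \<circ> (\<lambda>u. (u, 0))) u = pdx ?S f (s, t) * u" by (simp add: pdx_def)
  qed
  ultimately show ?thesis by (simp add: has_field_derivative_def o_def)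
qed

lemma pdt_deriv:
  assumes dif: "f differentiable (at (x, t) within dom_T T)" and t: "t \<in> {0..T}"
  shows "((\<lambda>t. f (x, t)) has_real_derivative pdt (dom_T T) f (x, t)) (at t within {0..T})"
proof -
  let ?S = "dom_T T"
  let ?D = "frechet_derivative f (at (x, t) within ?S)"
  have fd: "(f has_derivative ?D) (at (x, t) within ?S)"
    using dif frechet_derivative_works by blast
  have lin: "linear ?D" using fd has_derivative_linear by blast
  have g: "((\<lambda>u. (x, u)) has_derivative (\<lambda>u. (0, u))) (at t within {0..T})"
    by (auto intro!: derivative_eq_intros)
  have im: "(\<lambda>u. (x, u)) ` {0..T} = ?S \<inter> {z. fst z = x}" by (auto simp: dom_T_def)
  have fd2: "(f has_derivative ?D) (at ((\<lambda>u. (x, u)) t) within (\<lambda>u. (x, u)) ` {0..T})"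
    using has_derivative_subset[OF fd] im by simp
  have "((f \<circ> (\<lambda>u. (x, u))) has_derivative (?D \<circ> (\<lambda>u. (0, u)))) (at t within {0..T})"
    using diff_chain_within[OF g fd2] by simp
  moreover have "(?D \<circ> (\<lambda>u. (0, u))) = (\<lambda>u. pdt ?S f (x, t) * u)"
  proof
    fix u :: real
    have "(0::real, u) = u *\<^sub>R (0, 1)" by simp
    then have "?D (0, u) = u *\<^sub>R ?D (0, 1)" using linear_scale[OF lin] by metis
    then show "(?D \<circ> (\<lambda>u. (0, u))) u = pdt ?S f (x, t) * u" by (simp add: pdt_def)
  qed
  ultimately show ?thesis by (simp add: has_field_derivative_def o_def)
qed

lemma frechet_shift:
  assumes per: "x_periodic L f"
  shows "frechet_derivative f (at (x + L, t) within dom_T T) = frechet_derivative f (at (x, t) within dom_T T)"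
proof -
  let ?S = "dom_T T"
  have sh: "\<And>c. (\<lambda>w. w + (c, 0::real)) ` ?S = ?S"
  proof -
    fix c :: real
    show "(\<lambda>w. w + (c, 0::real)) ` ?S = ?S"
    proof
      show "(\<lambda>w. w + (c, 0::real)) ` ?S \<subseteq> ?S" by (auto simp: dom_T_def)
      show "?S \<subseteq> (\<lambda>w. w + (c, 0::real)) ` ?S"
      proof
        fix w assume w: "w \<in> ?S"
        have "w - (c, 0) \<in> ?S" using w by (cases w) (simp add: dom_T_def)
        moreover have "w = (w - (c, 0)) + (c, 0)" by simp
        ultimately show "w \<in> (\<lambda>w. w + (c, 0::real)) ` ?S" by (rule rev_image_eqI)
      qed
    qed
  qed
  have f1: "f \<circ> (\<lambda>w. w + (L, 0)) = f" using per by (auto simp: x_periodic_def fun_eq_iff)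
  have f2: "f \<circ> (\<lambda>w. w + (-L, 0)) = f"
  proof
    fix w :: "real \<times> real"
    obtain a b where w: "w = (a, b)" by (cases w)
    have "f (a - L + L, b) = f (a - L, b)" using per unfolding x_periodic_def by blast
    then show "(f \<circ> (\<lambda>w. w + (-L, 0))) w = f w" by (simp add: w)
  qed
  have eq: "(f has_derivative D) (at (x + L, t) within ?S) \<longleftrightarrow> (f has_derivative D) (at (x, t) within ?S)" for D
  proof
    assume a: "(f has_derivative D) (at (x + L, t) within ?S)"
    have g: "((\<lambda>w. w + (L, 0::real)) has_derivative id) (at (x, t) within ?S)"
      by (auto intro!: derivative_eq_intros simp: id_def)
    have "(f has_derivative D) (at ((\<lambda>w. w + (L, 0::real)) (x, t)) within (\<lambda>w. w + (L, 0::real)) ` ?S)"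
      using a sh by simp
    from diff_chain_within[OF g this] show "(f has_derivative D) (at (x, t) within ?S)"
      using f1 by simp
  next
    assume a: "(f has_derivative D) (at (x, t) within ?S)"
    have g: "((\<lambda>w. w + (-L, 0::real)) has_derivative id) (at (x + L, t) within ?S)"
      by (auto intro!: derivative_eq_intros simp: id_def)
    have "(f has_derivative D) (at ((\<lambda>w. w + (-L, 0::real)) (x + L, t)) within (\<lambda>w. w + (-L, 0::real)) ` ?S)"
      using a sh[of "-L"] by simp
    from diff_chain_within[OF g this] show "(f has_derivative D) (at (x + L, t) within ?S)"
      using f2 by simp
  qed
  show ?thesis unfolding frechet_derivative_def using eq by simp
qed

lemma periodic_pdx: "x_periodic L f \<Longrightarrow> x_periodic L (pdx (dom_T T) f)"
  unfolding x_periodic_def pdx_def using frechet_shift[of L f] by (simp add: x_periodic_def)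

lemma periodic_pdt: "x_periodic L f \<Longrightarrow> x_periodic L (pdt (dom_T T) f)"
  unfolding x_periodic_def pdt_def using frechet_shift[of L f] by (simp add: x_periodic_def)

lemma periodic_int:
  assumes "x_periodic L f"
  shows "f (x + real_of_int m * L, t) = f (x, t)"
proof -
  have nat: "f (y + real j * L, t) = f (y, t)" for y j
  proof (induction j)
    case 0 then show ?case by simp
  next
    case (Suc j)
    have "f (y + real (Suc j) * L, t) = f ((y + real j * L) + L, t)" by (simp add: algebra_simps)
    also have "\<dots> = f (y + real j * L, t)" using assms by (simp add: x_periodic_def)
    finally show ?case using Suc by simp
  qed
  show ?thesis
  proof (cases "m \<ge> 0")
    case True
    then show ?thesis using nat[of x "nat m"] by simp
  next
    case False
    have "f (x + real_of_int m * L + real (nat (-m)) * L, t) = f (x + real_of_int m * L, t)" by (rule nat)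
    then show ?thesis using False by simp
  qed
qed

lemma bounded_periodic:
  assumes L: "L > 0" and c: "continuous_on (dom_T T) F" and per: "x_periodic L F"
  shows "\<exists>B. \<forall>z\<in>dom_T T. \<bar>F z\<bar> \<le> B"
proof -
  let ?K = "{0..L} \<times> {0..T}"
  have K: "compact ?K" by (intro compact_Times compact_Icc)
  have sub: "?K \<subseteq> dom_T T" by (auto simp: dom_T_def)
  have "continuous_on ?K F" using c sub by (rule continuous_on_subset)
  then have "compact (F ` ?K)" using K by (rule compact_continuous_image)
  then have "bounded (F ` ?K)" by (rule compact_imp_bounded)
  then obtain B where B0: "\<forall>y\<in>F ` ?K. norm y \<le> B"
    unfolding bounded_iff by blast
  have B: "\<bar>F z\<bar> \<le> B" if "z \<in> ?K" for z using B0 that by auto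
  show ?thesis
  proof (intro exI ballI)
    fix z assume z: "z \<in> dom_T T"
    obtain x t where zt: "z = (x, t)" by (cases z)
    define m where "m = \<lfloor>x / L\<rfloor>"
    have m1: "real_of_int m \<le> x / L" unfolding m_def by (rule of_int_floor_le)
    have m2: "x / L < real_of_int m + 1" unfolding m_def by (rule real_of_int_floor_add_one_gt)
    have r1: "real_of_int m * L \<le> x" using m1 L by (simp add: pos_le_divide_eq)
    have r2: "x < (real_of_int m + 1) * L" using m2 L by (simp add: pos_divide_less_eq)
    have r: "0 \<le> x - real_of_int m * L" "x - real_of_int m * L \<le> L" using r1 r2
      by (simp_all add: algebra_simps)
    have t: "t \<in> {0..T}" using z zt by (simp add: dom_T_def)
    have "F (x, t) = F (x - real_of_int m * L, t)"
      using periodic_int[OF per, of "x - real_of_int m * L" m t] by simp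
    also have "\<bar>\<dots>\<bar> \<le> B" using r t by (intro B) simp
    finally show "\<bar>F z\<bar> \<le> B" using zt by simp
  qed
qed

lemma bounded_periodic_family:
  fixes n :: nat
  assumes L: "L > 0" and c: "\<And>i. i < n \<Longrightarrow> continuous_on (dom_T T) (F i) \<and> x_periodic L (F i)"
  shows "\<exists>B. \<forall>i<n. \<forall>z\<in>dom_T T. \<bar>F i z\<bar> \<le> B"
proof -
  have "\<forall>i\<in>{..<n}. \<exists>B. \<forall>z\<in>dom_T T. \<bar>F i z\<bar> \<le> B"
    using bounded_periodic[OF L] c by blast
  then obtain B where B: "\<forall>i\<in>{..<n}. \<forall>z\<in>dom_T T. \<bar>F i z\<bar> \<le> B i"
    by (rule bchoice[THEN exE]) blast
  show ?thesis
  proof (intro exI allI impI ballI)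
    fix i z assume i: "i < n" and z: "z \<in> dom_T T"
    have "\<bar>F i z\<bar> \<le> B i" using B i z by blast
    also have "B i \<le> \<bar>B i\<bar>" by (rule abs_ge_self)
    also have "\<bar>B i\<bar> \<le> (\<Sum>j<n. \<bar>B j\<bar>)"
      using i by (intro member_le_sum) auto
    finally show "\<bar>F i z\<bar> \<le> (\<Sum>j<n. \<bar>B j\<bar>)" .
  qed
qed


lemma taylor3:
  fixes g ga gb gc :: "real \<Rightarrow> real"
  assumes d0: "\<And>s. (g has_real_derivative ga s) (at s)"
    and d1: "\<And>s. (ga has_real_derivative gb s) (at s)"
    and d2: "\<And>s. (gb has_real_derivative gc s) (at s)"
    and b: "\<And>s. \<bar>gc s\<bar> \<le> M"
  shows "\<bar>g (x + a) - (g x + a * ga x + a^2/2 * gb x)\<bar> \<le> M * \<bar>a\<bar>^3 / 6"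
proof (cases "a = 0")
  case True
  have "0 \<le> M" using b[of 0] by linarith
  then show ?thesis using True by simp
next
  case False
  define diff where "diff = (\<lambda>m::nat. if m = 0 then g else if m = 1 then ga else if m = 2 then gb else gc)"
  have D: "\<forall>m t. m < 3 \<and> min x (x + a) \<le> t \<and> t \<le> max x (x + a) \<longrightarrow> DERIV (diff m) t :> diff (Suc m) t"
  proof (intro allI impI)
    fix m :: nat and t assume "m < 3 \<and> min x (x + a) \<le> t \<and> t \<le> max x (x + a)"
    then have "m = 0 \<or> m = 1 \<or> m = 2" by auto
    then show "DERIV (diff m) t :> diff (Suc m) t"
      using d0 d1 d2 by (auto simp: diff_def)
  qed
  obtain t where t: "g (x + a) = (\<Sum>m<3. (diff m x / fact m) * (x + a - x)^m) + (diff 3 t / fact 3) * (x + a - x)^3"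
    using Taylor[of 3 diff g "min x (x + a)" "max x (x + a)" x "x + a", OF _ _ D] False
    by (auto simp: diff_def)
  have s: "(\<Sum>m<3. (diff m x / fact m) * (x + a - x)^m) = g x + a * ga x + a^2/2 * gb x"
    by (simp add: numeral_3_eq_3 diff_def eval_nat_numeral)
  have "g (x + a) - (g x + a * ga x + a^2/2 * gb x) = gc t / 6 * a^3"
    using t s by (simp add: diff_def eval_nat_numeral)
  also have "\<bar>\<dots>\<bar> = \<bar>gc t\<bar> * \<bar>a\<bar>^3 / 6" by (simp add: abs_mult power_abs)
  also have "\<dots> \<le> M * \<bar>a\<bar>^3 / 6" using b[of t] by (intro divide_right_mono mult_right_mono) auto
  finally show ?thesis .
qed

lemma lip_within:
  fixes g g' :: "real \<Rightarrow> real"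
  assumes d: "\<And>t. t \<in> {a..b} \<Longrightarrow> (g has_real_derivative g' t) (at t within {a..b})"
    and bd: "\<And>t. t \<in> {a..b} \<Longrightarrow> \<bar>g' t\<bar> \<le> M"
    and s: "s \<in> {a..b}" and u: "u \<in> {a..b}"
  shows "\<bar>g s - g u\<bar> \<le> M * \<bar>s - u\<bar>"
  using field_differentiable_bound[of "{a..b}" g g' M s u] d bd s u by auto

lemma time2:
  fixes g g' g'' :: "real \<Rightarrow> real"
  assumes d: "\<And>t. t \<in> {0..T} \<Longrightarrow> (g has_real_derivative g' t) (at t within {0..T})"
    and d': "\<And>t. t \<in> {0..T} \<Longrightarrow> (g' has_real_derivative g'' t) (at t within {0..T})"
    and bd: "\<And>t. t \<in> {0..T} \<Longrightarrow> \<bar>g'' t\<bar> \<le> M"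
    and t: "0 \<le> t0" "t0 \<le> t1" "t1 \<le> T"
  shows "\<bar>g t1 - g t0 - (t1 - t0) * g' t0\<bar> \<le> M * (t1 - t0)^2"
proof -
  define \<phi> where "\<phi> = (\<lambda>s. g s - s * g' t0)"
  have sub: "{t0..t1} \<subseteq> {0..T}" using t by auto
  have dphi: "(\<phi> has_real_derivative (g' s - g' t0)) (at s within {t0..t1})" if s: "s \<in> {t0..t1}" for s
  proof -
    have "(g has_real_derivative g' s) (at s within {t0..t1})"
      using d[of s] s sub by (intro has_field_derivative_subset[OF _ sub]) auto
    then show ?thesis unfolding \<phi>_def by (auto intro!: derivative_eq_intros)
  qed
  have bphi: "\<bar>g' s - g' t0\<bar> \<le> M * (t1 - t0)" if s: "s \<in> {t0..t1}" for s
  proof -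
    have "\<bar>g' s - g' t0\<bar> \<le> M * \<bar>s - t0\<bar>"
      using s sub t by (intro lip_within[OF d' bd]) auto
    also have "\<dots> \<le> M * (t1 - t0)"
      using s bd[of t0] t by (intro mult_left_mono) auto
    finally show ?thesis .
  qed
  have "\<bar>\<phi> t1 - \<phi> t0\<bar> \<le> M * (t1 - t0) * \<bar>t1 - t0\<bar>"
    using t by (intro lip_within[OF dphi bphi]) auto
  then show ?thesis using t by (simp add: \<phi>_def algebra_simps power2_eq_square)
qed


lemma Ck3_facts:
  assumes "Ck_on 3 S f"
  shows "continuous_on S f" "continuous_on S (pdx S f)" "continuous_on S (pdx S (pdx S f))"
    "continuous_on S (pdx S (pdx S (pdx S f)))" "continuous_on S (pdt S f)"
    "continuous_on S (pdt S (pdt S f))" "continuous_on S (pdt S (pdx S f))"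
    "\<forall>z\<in>S. f differentiable (at z within S)"
    "\<forall>z\<in>S. pdx S f differentiable (at z within S)"
    "\<forall>z\<in>S. pdx S (pdx S f) differentiable (at z within S)"
    "\<forall>z\<in>S. pdt S f differentiable (at z within S)"
  using assms by (simp_all add: numeral_3_eq_3 numeral_2_eq_2)

lemma Big_prod_approx:
  assumes "Big A g (\<lambda>p. a p - c p)" "Big A g (\<lambda>p. b p - d p)" "Bd A b" "Bd A c"
  shows "Big A g (\<lambda>p. a p * b p - c p * d p)"
proof -
  have "Big A g (\<lambda>p. (a p - c p) * b p + c p * (b p - d p))"
    by (intro Big_add Big_mult_Bd Bd_mult_Big assms)
  then show ?thesis by (rule Big_cong) (simp add: algebra_simps)
qed

lemma Big_sum_approx:
  assumes "finite J" "\<And>j. j \<in> J \<Longrightarrow> Big A g (\<lambda>p. a j p - c j p)"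
  shows "Big A g (\<lambda>p. (\<Sum>j\<in>J. a j p) - (\<Sum>j\<in>J. c j p))"
  using Big_sum[OF assms] by (simp add: sum_subtractf)

lemma Bd_add: "Bd A E \<Longrightarrow> Bd A F \<Longrightarrow> Bd A (\<lambda>p. E p + F p)" by (rule Big_add)
lemma Bd_diff: "Bd A E \<Longrightarrow> Bd A F \<Longrightarrow> Bd A (\<lambda>p. E p - F p)" by (rule Big_diff)
lemma Bd_mult: "Bd A E \<Longrightarrow> Bd A F \<Longrightarrow> Bd A (\<lambda>p. E p * F p)" using Big_mult[of A "\<lambda>_. 1" E "\<lambda>_. 1" F] by simp
lemma Bd_sum: "finite J \<Longrightarrow> (\<And>j. j \<in> J \<Longrightarrow> Bd A (E j)) \<Longrightarrow> Bd A (\<lambda>p. \<Sum>j\<in>J. E j p)" by (rule Big_sum)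


type_synonym par = "nat \<times> real \<times> nat \<times> nat \<times> int"

locale setting =
  fixes n :: nat and L T :: real and b :: "nat \<Rightarrow> nat \<Rightarrow> real"
    and P V :: "nat \<Rightarrow> real \<times> real \<Rightarrow> real"
  assumes n: "n \<ge> 2" and L: "L > 0" and T: "T > 0"
    and reg: "\<And>i. i < n \<Longrightarrow> Ck_on 3 (dom_T T) (P i) \<and> Ck_on 3 (dom_T T) (V i)"
    and per: "\<And>i. i < n \<Longrightarrow> x_periodic L (P i) \<and> x_periodic L (V i)"
    and pos: "\<And>i z. i < n \<Longrightarrow> z \<in> dom_T T \<Longrightarrow> P i z > 0"
    and eq1: "\<And>i z. i < n \<Longrightarrow> z \<in> dom_T T \<Longrightarrow>
       pdt (dom_T T) (P i) z + pdx (dom_T T) (\<lambda>w. P i w * V i w) z = 0"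
    and eq2: "\<And>i z. i < n \<Longrightarrow> z \<in> dom_T T \<Longrightarrow>
       - (\<Sum>j<n. b i j * P j z * (V i z - V j z))
         = pdx (dom_T T) (\<lambda>w. ln (P i w)) z
           - (1 / (\<Sum>j<n. P j z)) * (\<Sum>j<n. P j z * pdx (dom_T T) (\<lambda>w. ln (P j w)) z)"
    and eq3: "\<And>z. z \<in> dom_T T \<Longrightarrow> (\<Sum>j<n. P j z * V j z) = 0"
begin

abbreviation "S \<equiv> dom_T T"

definition "Px i = pdx S (P i)"
definition "Pxx i = pdx S (Px i)"
definition "Pxxx i = pdx S (Pxx i)"
definition "Pt i = pdt S (P i)"
definition "Ptt i = pdt S (Pt i)"
definition "Pxt i = pdt S (Px i)"
definition "Vx i = pdx S (V i)"
definition "Vxx i = pdx S (Vx i)"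
definition "Vxxx i = pdx S (Vxx i)"
definition "Vt i = pdt S (V i)"
definition "Vxt i = pdt S (Vx i)"

definition "G i = (\<lambda>z. Px i z / P i z)"
definition "G2 i = (\<lambda>z. Pxx i z / P i z - (Px i z / P i z)^2)"
definition "G3 i = (\<lambda>z. Pxxx i z / P i z - Pxx i z * Px i z / (P i z)^2
    - 2 * (Px i z / P i z) * (Pxx i z / P i z - (Px i z)^2 / (P i z)^2))"
definition "IP i = (\<lambda>z. 1 / P i z)"

definition "OK F \<longleftrightarrow> (\<forall>i<n. continuous_on S (F i) \<and> x_periodic L (F i))"

lemma P_facts:
  assumes i: "i < n"
  shows "continuous_on S (P i)" "continuous_on S (Px i)" "continuous_on S (Pxx i)"
    "continuous_on S (Pxxx i)" "continuous_on S (Pt i)"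
    "continuous_on S (Ptt i)" "continuous_on S (Pxt i)"
    "\<forall>z\<in>S. P i differentiable (at z within S)"
    "\<forall>z\<in>S. Px i differentiable (at z within S)"
    "\<forall>z\<in>S. Pxx i differentiable (at z within S)"
    "\<forall>z\<in>S. Pt i differentiable (at z within S)"
  using Ck3_facts[OF conjunct1[OF reg[OF i]]]
  unfolding Px_def Pxx_def Pxxx_def Pt_def Ptt_def Pxt_def by auto

lemma V_facts:
  assumes i: "i < n"
  shows "continuous_on S (V i)" "continuous_on S (Vx i)" "continuous_on S (Vxx i)"
    "continuous_on S (Vxxx i)" "continuous_on S (Vt i)" "continuous_on S (Vxt i)"
    "\<forall>z\<in>S. V i differentiable (at z within S)"
    "\<forall>z\<in>S. Vx i differentiable (at z within S)"
    "\<forall>z\<in>S. Vxx i differentiable (at z within S)"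
  using Ck3_facts[OF conjunct2[OF reg[OF i]]]
  unfolding Vx_def Vxx_def Vxxx_def Vt_def Vxt_def by auto

lemma P_per: assumes i: "i < n"
  shows "x_periodic L (P i)" "x_periodic L (Px i)" "x_periodic L (Pxx i)" "x_periodic L (Pxxx i)"
    "x_periodic L (Pt i)" "x_periodic L (Ptt i)" "x_periodic L (Pxt i)"
  using per[OF i] unfolding Px_def Pxx_def Pxxx_def Pt_def Ptt_def Pxt_def
  by (auto intro!: periodic_pdx periodic_pdt)

lemma V_per: assumes i: "i < n"
  shows "x_periodic L (V i)" "x_periodic L (Vx i)" "x_periodic L (Vxx i)" "x_periodic L (Vxxx i)"
    "x_periodic L (Vt i)" "x_periodic L (Vxt i)"
  using per[OF i] unfolding Vx_def Vxx_def Vxxx_def Vt_def Vxt_def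
  by (auto intro!: periodic_pdx periodic_pdt)

lemma per_comb:
  "x_periodic L f \<Longrightarrow> x_periodic L g \<Longrightarrow> x_periodic L (\<lambda>z. H (f z) (g z))"
  by (simp add: x_periodic_def)

lemma per_comb3:
  "x_periodic L f \<Longrightarrow> x_periodic L g \<Longrightarrow> x_periodic L h \<Longrightarrow> x_periodic L k \<Longrightarrow> x_periodic L (\<lambda>z. H (f z) (g z) (h z) (k z))"
  by (simp add: x_periodic_def)

lemma Pne: "i < n \<Longrightarrow> z \<in> S \<Longrightarrow> P i z \<noteq> 0" using pos[of i z] by linarith

lemma OK_all: "OK P" "OK Px" "OK Pxx" "OK Pxxx" "OK Pt" "OK Ptt" "OK Pxt"
  "OK V" "OK Vx" "OK Vxx" "OK Vxxx" "OK Vt" "OK Vxt"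
  unfolding OK_def using P_facts P_per V_facts V_per by auto

lemma OK_IP: "OK IP"
  unfolding OK_def IP_def
proof (intro allI impI conjI)
  fix i assume i: "i < n"
  show "continuous_on S (\<lambda>z. 1 / P i z)"
    using P_facts(1)[OF i] Pne[OF i] by (auto intro!: continuous_intros)
  show "x_periodic L (\<lambda>z. 1 / P i z)" using P_per(1)[OF i] by (simp add: x_periodic_def)
qed

lemma OK_G: "OK G"
  unfolding OK_def G_def
proof (intro allI impI conjI)
  fix i assume i: "i < n"
  show "continuous_on S (\<lambda>z. Px i z / P i z)"
    using P_facts[OF i] Pne[OF i] by (auto intro!: continuous_intros)
  show "x_periodic L (\<lambda>z. Px i z / P i z)" using P_per[OF i] by (simp add: x_periodic_def)
qed

lemma OK_G3: "OK G3"
  unfolding OK_def G3_def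
proof (intro allI impI conjI)
  fix i assume i: "i < n"
  show "continuous_on S (\<lambda>z. Pxxx i z / P i z - Pxx i z * Px i z / (P i z)^2
    - 2 * (Px i z / P i z) * (Pxx i z / P i z - (Px i z)^2 / (P i z)^2))"
    using P_facts[OF i] Pne[OF i] by (auto intro!: continuous_intros)
  show "x_periodic L (\<lambda>z. Pxxx i z / P i z - Pxx i z * Px i z / (P i z)^2
    - 2 * (Px i z / P i z) * (Pxx i z / P i z - (Px i z)^2 / (P i z)^2))"
    using P_per[OF i] by (simp add: x_periodic_def)
qed

lemma OK_bound: "OK F \<Longrightarrow> \<exists>B. \<forall>i<n. \<forall>z\<in>S. \<bar>F i z\<bar> \<le> B"
  unfolding OK_def by (rule bounded_periodic_family[OF L]) auto

lemma BdF:
  assumes "OK F" "\<And>p. p \<in> A \<Longrightarrow> \<iota> p < n \<and> \<tau> p \<in> {0..T}"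
  shows "Bd A (\<lambda>p. F (\<iota> p) (\<xi> p, \<tau> p))"
proof -
  obtain B where B: "\<forall>i<n. \<forall>z\<in>S. \<bar>F i z\<bar> \<le> B" using OK_bound[OF assms(1)] by blast
  show ?thesis
    by (rule BdI[of _ _ B]) (use B assms(2) in \<open>auto simp: dom_T_def\<close>)
qed

end


context setting begin

lemma P_dx: "i < n \<Longrightarrow> t \<in> {0..T} \<Longrightarrow> ((\<lambda>s. P i (s, t)) has_real_derivative Px i (s, t)) (at s)"
  unfolding Px_def by (rule pdx_deriv) (use P_facts(8) in \<open>auto simp: dom_T_def\<close>)
lemma Px_dx: "i < n \<Longrightarrow> t \<in> {0..T} \<Longrightarrow> ((\<lambda>s. Px i (s, t)) has_real_derivative Pxx i (s, t)) (at s)"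
  unfolding Pxx_def by (rule pdx_deriv) (use P_facts(9) in \<open>auto simp: dom_T_def\<close>)
lemma Pxx_dx: "i < n \<Longrightarrow> t \<in> {0..T} \<Longrightarrow> ((\<lambda>s. Pxx i (s, t)) has_real_derivative Pxxx i (s, t)) (at s)"
  unfolding Pxxx_def by (rule pdx_deriv) (use P_facts(10) in \<open>auto simp: dom_T_def\<close>)
lemma V_dx: "i < n \<Longrightarrow> t \<in> {0..T} \<Longrightarrow> ((\<lambda>s. V i (s, t)) has_real_derivative Vx i (s, t)) (at s)"
  unfolding Vx_def by (rule pdx_deriv) (use V_facts(7) in \<open>auto simp: dom_T_def\<close>)
lemma Vx_dx: "i < n \<Longrightarrow> t \<in> {0..T} \<Longrightarrow> ((\<lambda>s. Vx i (s, t)) has_real_derivative Vxx i (s, t)) (at s)"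
  unfolding Vxx_def by (rule pdx_deriv) (use V_facts(8) in \<open>auto simp: dom_T_def\<close>)
lemma Vxx_dx: "i < n \<Longrightarrow> t \<in> {0..T} \<Longrightarrow> ((\<lambda>s. Vxx i (s, t)) has_real_derivative Vxxx i (s, t)) (at s)"
  unfolding Vxxx_def by (rule pdx_deriv) (use V_facts(9) in \<open>auto simp: dom_T_def\<close>)

lemma P_dt: "i < n \<Longrightarrow> t \<in> {0..T} \<Longrightarrow> ((\<lambda>t. P i (x, t)) has_real_derivative Pt i (x, t)) (at t within {0..T})"
  unfolding Pt_def by (rule pdt_deriv) (use P_facts(8) in \<open>auto simp: dom_T_def\<close>)
lemma Pt_dt: "i < n \<Longrightarrow> t \<in> {0..T} \<Longrightarrow> ((\<lambda>t. Pt i (x, t)) has_real_derivative Ptt i (x, t)) (at t within {0..T})"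
  unfolding Ptt_def by (rule pdt_deriv) (use P_facts(11) in \<open>auto simp: dom_T_def\<close>)
lemma Px_dt: "i < n \<Longrightarrow> t \<in> {0..T} \<Longrightarrow> ((\<lambda>t. Px i (x, t)) has_real_derivative Pxt i (x, t)) (at t within {0..T})"
  unfolding Pxt_def by (rule pdt_deriv) (use P_facts(9) in \<open>auto simp: dom_T_def\<close>)
lemma V_dt: "i < n \<Longrightarrow> t \<in> {0..T} \<Longrightarrow> ((\<lambda>t. V i (x, t)) has_real_derivative Vt i (x, t)) (at t within {0..T})"
  unfolding Vt_def by (rule pdt_deriv) (use V_facts(7) in \<open>auto simp: dom_T_def\<close>)
lemma Vx_dt: "i < n \<Longrightarrow> t \<in> {0..T} \<Longrightarrow> ((\<lambda>t. Vx i (x, t)) has_real_derivative Vxt i (x, t)) (at t within {0..T})"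
  unfolding Vxt_def by (rule pdt_deriv) (use V_facts(8) in \<open>auto simp: dom_T_def\<close>)

lemma lnP_dx: "i < n \<Longrightarrow> t \<in> {0..T} \<Longrightarrow> ((\<lambda>s. ln (P i (s, t))) has_real_derivative G i (s, t)) (at s)"
proof -
  assume i: "i < n" and t: "t \<in> {0..T}"
  have p: "P i (s, t) > 0" using pos[OF i] t by (simp add: dom_T_def)
  show ?thesis unfolding G_def
    using p by (auto intro!: derivative_eq_intros P_dx[OF i t] simp: field_simps)
qed

lemma G_dx: "i < n \<Longrightarrow> t \<in> {0..T} \<Longrightarrow> ((\<lambda>s. G i (s, t)) has_real_derivative G2 i (s, t)) (at s)"
proof -
  assume i: "i < n" and t: "t \<in> {0..T}"
  have p: "P i (s, t) > 0" using pos[OF i] t by (simp add: dom_T_def)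
  show ?thesis unfolding G_def G2_def
    using p by (auto intro!: derivative_eq_intros P_dx[OF i t] Px_dx[OF i t] simp: field_simps power2_eq_square)
qed

lemma G2_dx: "i < n \<Longrightarrow> t \<in> {0..T} \<Longrightarrow> ((\<lambda>s. G2 i (s, t)) has_real_derivative G3 i (s, t)) (at s)"
proof -
  assume i: "i < n" and t: "t \<in> {0..T}"
  have p: "P i (s, t) > 0" using pos[OF i] t by (simp add: dom_T_def)
  show ?thesis unfolding G2_def G3_def
    using p by (auto intro!: derivative_eq_intros P_dx[OF i t] Px_dx[OF i t] Pxx_dx[OF i t]
      simp: field_simps power2_eq_square)
qed

lemma taylor_gen:
  assumes d0: "\<And>i t s. i < n \<Longrightarrow> t \<in> {0..T} \<Longrightarrow> ((\<lambda>s. F i (s, t)) has_real_derivative F1 i (s, t)) (at s)"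
    and d1: "\<And>i t s. i < n \<Longrightarrow> t \<in> {0..T} \<Longrightarrow> ((\<lambda>s. F1 i (s, t)) has_real_derivative F2 i (s, t)) (at s)"
    and d2: "\<And>i t s. i < n \<Longrightarrow> t \<in> {0..T} \<Longrightarrow> ((\<lambda>s. F2 i (s, t)) has_real_derivative F3 i (s, t)) (at s)"
    and ok: "OK F3"
  shows "\<exists>M\<ge>0. \<forall>i<n. \<forall>t\<in>{0..T}. \<forall>x a.
     \<bar>F i (x + a, t) - (F i (x, t) + a * F1 i (x, t) + a^2/2 * F2 i (x, t))\<bar> \<le> M * \<bar>a\<bar>^3"
proof -
  obtain B where B: "\<forall>i<n. \<forall>z\<in>S. \<bar>F3 i z\<bar> \<le> B" using OK_bound[OF ok] by blast
  show ?thesis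
  proof (intro exI[of _ "max B 0 / 6"] conjI allI impI ballI)
    fix i t x a assume i: "i < n" and t: "t \<in> {0..T}"
    have "\<bar>F i (x + a, t) - (F i (x, t) + a * F1 i (x, t) + a^2/2 * F2 i (x, t))\<bar> \<le> max B 0 * \<bar>a\<bar>^3 / 6"
      by (rule taylor3[where g = "\<lambda>s. F i (s, t)" and ga = "\<lambda>s. F1 i (s, t)" and gb = "\<lambda>s. F2 i (s, t)"
          and gc = "\<lambda>s. F3 i (s, t)"])
        (use d0 d1 d2 i t B in \<open>auto simp: dom_T_def intro: order.trans[OF _ max.cobounded1]\<close>)
    then show "\<bar>F i (x + a, t) - (F i (x, t) + a * F1 i (x, t) + a^2/2 * F2 i (x, t))\<bar> \<le> max B 0 / 6 * \<bar>a\<bar>^3"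
      by simp
  qed simp
qed

lemma lip_gen:
  assumes d: "\<And>i t x. i < n \<Longrightarrow> t \<in> {0..T} \<Longrightarrow> ((\<lambda>t. F i (x, t)) has_real_derivative F1 i (x, t)) (at t within {0..T})"
    and ok: "OK F1"
  shows "\<exists>M\<ge>0. \<forall>i<n. \<forall>x. \<forall>t0\<in>{0..T}. \<forall>t1\<in>{0..T}. \<bar>F i (x, t1) - F i (x, t0)\<bar> \<le> M * \<bar>t1 - t0\<bar>"
proof -
  obtain B where B: "\<forall>i<n. \<forall>z\<in>S. \<bar>F1 i z\<bar> \<le> B" using OK_bound[OF ok] by blast
  show ?thesis
  proof (intro exI[of _ "max B 0"] conjI allI impI ballI)
    fix i x t0 t1 assume i: "i < n" and t: "t0 \<in> {0..T}" "t1 \<in> {0..T}"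
    show "\<bar>F i (x, t1) - F i (x, t0)\<bar> \<le> max B 0 * \<bar>t1 - t0\<bar>"
      by (rule lip_within[where g = "\<lambda>t. F i (x, t)" and g' = "\<lambda>t. F1 i (x, t)"])
        (use d i t B in \<open>auto simp: dom_T_def intro: order.trans[OF _ max.cobounded1]\<close>)
  qed simp
qed

lemma time2_P:
  "\<exists>M\<ge>0. \<forall>i<n. \<forall>x t0 t1. 0 \<le> t0 \<longrightarrow> t0 \<le> t1 \<longrightarrow> t1 \<le> T \<longrightarrow>
     \<bar>P i (x, t1) - P i (x, t0) - (t1 - t0) * Pt i (x, t0)\<bar> \<le> M * (t1 - t0)^2"
proof -
  obtain B where B: "\<forall>i<n. \<forall>z\<in>S. \<bar>Ptt i z\<bar> \<le> B" using OK_bound[OF OK_all(6)] by blast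
  show ?thesis
  proof (intro exI[of _ "max B 0"] conjI allI impI)
    fix i x t0 t1 assume i: "i < n" and t: "0 \<le> t0" "t0 \<le> t1" "t1 \<le> T"
    show "\<bar>P i (x, t1) - P i (x, t0) - (t1 - t0) * Pt i (x, t0)\<bar> \<le> max B 0 * (t1 - t0)^2"
      by (rule time2[where g = "\<lambda>t. P i (x, t)" and g' = "\<lambda>t. Pt i (x, t)" and g'' = "\<lambda>t. Ptt i (x, t)"])
        (use P_dt Pt_dt i t B in \<open>auto simp: dom_T_def intro: order.trans[OF _ max.cobounded1]\<close>)
  qed simp
qed

lemma prod_rule: "i < n \<Longrightarrow> z \<in> S \<Longrightarrow> pdx S (\<lambda>w. P i w * V i w) z = P i z * Vx i z + V i z * Px i z"
proof -
  assume i: "i < n" and z: "z \<in> S"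
  let ?DP = "frechet_derivative (P i) (at z within S)"
  let ?DV = "frechet_derivative (V i) (at z within S)"
  have dP: "(P i has_derivative ?DP) (at z within S)" using P_facts(8)[OF i] z frechet_derivative_works by blast
  have dV: "(V i has_derivative ?DV) (at z within S)" using V_facts(7)[OF i] z frechet_derivative_works by blast
  have "((\<lambda>w. P i w * V i w) has_derivative (\<lambda>h. P i z * ?DV h + ?DP h * V i z)) (at z within S)"
    by (rule has_derivative_mult[OF dP dV])
  from frechet_unique_dom[OF T z this] show ?thesis
    by (simp add: pdx_def Px_def Vx_def)
qed

lemma ln_rule: "i < n \<Longrightarrow> z \<in> S \<Longrightarrow> pdx S (\<lambda>w. ln (P i w)) z = G i z"
proof -
  assume i: "i < n" and z: "z \<in> S"
  let ?DP = "frechet_derivative (P i) (at z within S)"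
  have dP: "(P i has_derivative ?DP) (at z within S)" using P_facts(8)[OF i] z frechet_derivative_works by blast
  have p: "P i z > 0" using pos[OF i z] .
  have "((\<lambda>w. ln (P i w)) has_derivative (\<lambda>h. ?DP h * inverse (P i z))) (at z within S)"
    by (rule DERIV_compose_FDERIV[OF DERIV_ln[OF p] dP])
  from frechet_unique_dom[OF T z this] show ?thesis
    by (simp add: pdx_def Px_def G_def divide_inverse)
qed

end


lemma Big_self: "(\<And>p. p \<in> A \<Longrightarrow> 0 \<le> g p) \<Longrightarrow> Big A g g"
  by (rule BigI[of A g 1]) simp

context setting begin

definition Adm :: "par set" where
  "Adm = {p. 1 \<le> fst p \<and> 0 < fst (snd p) \<and> real (fst (snd (snd p)) + 1) * fst (snd p) \<le> T \<and> fst (snd (snd (snd p))) < n}"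
definition "hh p = L / real (fst (p::par))"
definition "dd (p::par) = fst (snd p)"
definition "kk (p::par) = fst (snd (snd p))"
definition "ii (p::par) = fst (snd (snd (snd p)))"
definition "ll (p::par) = snd (snd (snd (snd p)))"
definition "t0 p = real (kk p) * dd p"
definition "t1 p = real (kk p + 1) * dd p"
definition "xx p = real_of_int (ll p) * hh p"
definition "yy p = xx p + hh p / 2"
definition "gg p = dd p + hh p ^ 2"

lemma Adm_facts:
  assumes p: "p \<in> Adm"
  shows "0 < hh p" "hh p \<le> L" "0 < dd p" "dd p \<le> T" "t0 p \<in> {0..T}" "t1 p \<in> {0..T}"
    "t1 p = t0 p + dd p" "ii p < n" "t0 p \<le> t1 p" "0 \<le> t0 p"
proof -
  obtain N dt k i l where pe: "p = (N, dt, k, i, l)" by (cases p) auto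
  have N: "1 \<le> N" and dt: "0 < dt" and kT: "real (k + 1) * dt \<le> T" and i: "i < n"
    using p by (auto simp: Adm_def pe)
  show "0 < hh p" using N L by (simp add: hh_def pe)
  show "hh p \<le> L" using N L by (simp add: hh_def pe divide_le_eq_1 field_simps)
  show "0 < dd p" using dt by (simp add: dd_def pe)
  have "dt \<le> real (k + 1) * dt" using dt by (simp add: algebra_simps)
  then show "dd p \<le> T" using kT by (simp add: dd_def pe)
  have a: "real k * dt \<le> real (k + 1) * dt" using dt by (intro mult_right_mono) auto
  have b: "0 \<le> real k * dt" using dt by simp
  have t0e: "t0 p = real k * dt" and t1e: "t1 p = real (k + 1) * dt" by (simp_all add: t0_def t1_def kk_def dd_def pe)
  show "t0 p \<in> {0..T}" unfolding t0e atLeastAtMost_iff using a b kT by (intro conjI; linarith)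
  show "t1 p \<in> {0..T}" unfolding t1e atLeastAtMost_iff using a b kT by (intro conjI; linarith)
  show "t0 p \<le> t1 p" "0 \<le> t0 p" unfolding t0e t1e using a b by simp_all
  show "t1 p = t0 p + dd p" by (simp add: t0_def t1_def algebra_simps)
  show "ii p < n" using i by (simp add: ii_def pe)
qed

lemma gg_pos: "p \<in> Adm \<Longrightarrow> 0 < gg p"
  using Adm_facts[of p] by (simp add: gg_def add_pos_nonneg)

lemma h3_gg: "Big Adm (\<lambda>p. hh p ^ 3) E \<Longrightarrow> Big Adm gg E"
proof (erule Big_mono)
  fix p assume p: "p \<in> Adm"
  note f = Adm_facts[OF p]
  have "hh p ^ 3 = hh p * hh p ^ 2" by (simp add: power3_eq_cube power2_eq_square)
  also have "\<dots> \<le> L * hh p ^ 2" using f by (intro mult_right_mono) auto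
  also have "\<dots> \<le> L * gg p" using f L by (intro mult_left_mono) (auto simp: gg_def)
  finally show "0 \<le> hh p ^ 3 \<and> hh p ^ 3 \<le> L * gg p" using f by simp
qed

lemma h3_h2: "Big Adm (\<lambda>p. hh p ^ 3) E \<Longrightarrow> Big Adm (\<lambda>p. hh p ^ 2) E"
proof (erule Big_mono)
  fix p assume p: "p \<in> Adm"
  note f = Adm_facts[OF p]
  have "hh p ^ 3 = hh p * hh p ^ 2" by (simp add: power3_eq_cube power2_eq_square)
  also have "\<dots> \<le> L * hh p ^ 2" using f by (intro mult_right_mono) auto
  finally show "0 \<le> hh p ^ 3 \<and> hh p ^ 3 \<le> L * hh p ^ 2" using f by simp
qed

lemma h2_gg: "Big Adm (\<lambda>p. hh p ^ 2) E \<Longrightarrow> Big Adm gg E"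
  by (erule Big_mono[where c = 1]) (use Adm_facts in \<open>auto simp: gg_def\<close>)

lemma dd_gg: "Big Adm dd E \<Longrightarrow> Big Adm gg E"
  by (erule Big_mono[where c = 1]) (use Adm_facts in \<open>auto simp: gg_def less_imp_le\<close>)

lemma Bd_hh: "Bd Adm hh"
  by (rule BdI[of _ _ L]) (use Adm_facts in \<open>auto simp: less_imp_le\<close>)

lemma Big_h3_self: "Big Adm (\<lambda>p. hh p ^ 3) (\<lambda>p. hh p ^ 3)"
  by (rule Big_self) (use Adm_facts in \<open>auto simp: less_imp_le\<close>)

lemma Big_h2_self: "Big Adm (\<lambda>p. hh p ^ 2) (\<lambda>p. hh p ^ 2)"
  by (rule Big_self) auto

lemma Tay_Big:
  assumes M: "M \<ge> 0" and R: "\<And>p. p \<in> Adm \<Longrightarrow> \<bar>R p\<bar> \<le> M * \<bar>a p\<bar>^3"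
    and a: "\<And>p. p \<in> Adm \<Longrightarrow> \<bar>a p\<bar> \<le> hh p"
  shows "Big Adm (\<lambda>p. hh p ^ 3) R"
proof (rule BigI[of _ _ M])
  fix p assume p: "p \<in> Adm"
  have "\<bar>R p\<bar> \<le> M * \<bar>a p\<bar>^3" by (rule R[OF p])
  also have "\<dots> \<le> M * hh p ^ 3" using M a[OF p] by (intro mult_left_mono power_mono) auto
  finally show "\<bar>R p\<bar> \<le> M * hh p ^ 3" .
qed

lemma TayP: "\<exists>M\<ge>0. \<forall>i<n. \<forall>t\<in>{0..T}. \<forall>x a.
     \<bar>P i (x + a, t) - (P i (x, t) + a * Px i (x, t) + a^2/2 * Pxx i (x, t))\<bar> \<le> M * \<bar>a\<bar>^3"
  by (rule taylor_gen[OF P_dx Px_dx Pxx_dx OK_all(4)])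

lemma TayV: "\<exists>M\<ge>0. \<forall>i<n. \<forall>t\<in>{0..T}. \<forall>x a.
     \<bar>V i (x + a, t) - (V i (x, t) + a * Vx i (x, t) + a^2/2 * Vxx i (x, t))\<bar> \<le> M * \<bar>a\<bar>^3"
  by (rule taylor_gen[OF V_dx Vx_dx Vxx_dx OK_all(11)])

lemma TayL: "\<exists>M\<ge>0. \<forall>i<n. \<forall>t\<in>{0..T}. \<forall>x a.
     \<bar>ln (P i (x + a, t)) - (ln (P i (x, t)) + a * G i (x, t) + a^2/2 * G2 i (x, t))\<bar> \<le> M * \<bar>a\<bar>^3"
  using taylor_gen[where F = "\<lambda>i z. ln (P i z)", OF lnP_dx G_dx G2_dx OK_G3] by simp

lemma Lip_Big:
  assumes M: "\<exists>M\<ge>0. \<forall>i<n. \<forall>x. \<forall>t0\<in>{0..T}. \<forall>t1\<in>{0..T}. \<bar>F i (x, t1) - F i (x, t0)\<bar> \<le> M * \<bar>t1 - t0\<bar>"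
    and i: "\<And>p. p \<in> Adm \<Longrightarrow> \<iota> p < n"
  shows "Big Adm dd (\<lambda>p. F (\<iota> p) (\<xi> p, t1 p) - F (\<iota> p) (\<xi> p, t0 p))"
proof -
  obtain M where M: "\<forall>i<n. \<forall>x. \<forall>t0\<in>{0..T}. \<forall>t1\<in>{0..T}. \<bar>F i (x, t1) - F i (x, t0)\<bar> \<le> M * \<bar>t1 - t0\<bar>"
    using M by blast
  show ?thesis
  proof (rule BigI[of _ _ M])
    fix p assume p: "p \<in> Adm"
    note f = Adm_facts[OF p]
    show "\<bar>F (\<iota> p) (\<xi> p, t1 p) - F (\<iota> p) (\<xi> p, t0 p)\<bar> \<le> M * dd p"
    proof -
      have "\<bar>F (\<iota> p) (\<xi> p, t1 p) - F (\<iota> p) (\<xi> p, t0 p)\<bar> \<le> M * \<bar>t1 p - t0 p\<bar>"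
        using M i[OF p] f(5,6) by blast
      then show ?thesis using f(3,7) by simp
    qed
  qed
qed

lemma LipP: "\<exists>M\<ge>0. \<forall>i<n. \<forall>x. \<forall>t0\<in>{0..T}. \<forall>t1\<in>{0..T}. \<bar>P i (x, t1) - P i (x, t0)\<bar> \<le> M * \<bar>t1 - t0\<bar>"
  by (rule lip_gen[OF P_dt OK_all(5)])
lemma LipPx: "\<exists>M\<ge>0. \<forall>i<n. \<forall>x. \<forall>t0\<in>{0..T}. \<forall>t1\<in>{0..T}. \<bar>Px i (x, t1) - Px i (x, t0)\<bar> \<le> M * \<bar>t1 - t0\<bar>"
  by (rule lip_gen[OF Px_dt OK_all(7)])
lemma LipV: "\<exists>M\<ge>0. \<forall>i<n. \<forall>x. \<forall>t0\<in>{0..T}. \<forall>t1\<in>{0..T}. \<bar>V i (x, t1) - V i (x, t0)\<bar> \<le> M * \<bar>t1 - t0\<bar>"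
  by (rule lip_gen[OF V_dt OK_all(12)])
lemma LipVx: "\<exists>M\<ge>0. \<forall>i<n. \<forall>x. \<forall>t0\<in>{0..T}. \<forall>t1\<in>{0..T}. \<bar>Vx i (x, t1) - Vx i (x, t0)\<bar> \<le> M * \<bar>t1 - t0\<bar>"
  by (rule lip_gen[OF Vx_dt OK_all(13)])

lemma BdA: "OK F \<Longrightarrow> (\<And>p. p \<in> Adm \<Longrightarrow> \<iota> p < n) \<Longrightarrow> (\<And>p. p \<in> Adm \<Longrightarrow> \<tau> p \<in> {0..T}) \<Longrightarrow>
   Bd Adm (\<lambda>p. F (\<iota> p) (\<xi> p, \<tau> p))"
  by (rule BdF) auto

lemma AVG:
  assumes i: "\<And>p. p \<in> Adm \<Longrightarrow> \<iota> p < n" and t: "\<And>p. p \<in> Adm \<Longrightarrow> \<tau> p \<in> {0..T}"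
  shows "Big Adm (\<lambda>p. hh p ^ 2) (\<lambda>p. (P (\<iota> p) (y p - hh p / 2, \<tau> p) + P (\<iota> p) (y p + hh p / 2, \<tau> p)) / 2
      - P (\<iota> p) (y p, \<tau> p))"
proof -
  obtain M where M0: "M \<ge> 0" and M: "\<forall>i<n. \<forall>t\<in>{0..T}. \<forall>x a.
     \<bar>P i (x + a, t) - (P i (x, t) + a * Px i (x, t) + a^2/2 * Pxx i (x, t))\<bar> \<le> M * \<bar>a\<bar>^3"
    using TayP by blast
  define Rp where "Rp p = P (\<iota> p) (y p + hh p / 2, \<tau> p) - (P (\<iota> p) (y p, \<tau> p) + (hh p / 2) * Px (\<iota> p) (y p, \<tau> p)
     + (hh p / 2)^2/2 * Pxx (\<iota> p) (y p, \<tau> p))" for p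
  define Rm where "Rm p = P (\<iota> p) (y p + - (hh p / 2), \<tau> p) - (P (\<iota> p) (y p, \<tau> p) + (- (hh p / 2)) * Px (\<iota> p) (y p, \<tau> p)
     + (- (hh p / 2))^2/2 * Pxx (\<iota> p) (y p, \<tau> p))" for p
  have bp: "Big Adm (\<lambda>p. hh p ^ 3) Rp"
  proof (rule Tay_Big[OF M0, where a = "\<lambda>p. hh p / 2"])
    fix p assume p: "p \<in> Adm"
    show "\<bar>Rp p\<bar> \<le> M * \<bar>hh p / 2\<bar> ^ 3" unfolding Rp_def using M i[OF p] t[OF p] by blast
    show "\<bar>hh p / 2\<bar> \<le> hh p" using Adm_facts(1)[OF p] by simp
  qed
  have bm: "Big Adm (\<lambda>p. hh p ^ 3) Rm"
  proof (rule Tay_Big[OF M0, where a = "\<lambda>p. - (hh p / 2)"])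
    fix p assume p: "p \<in> Adm"
    show "\<bar>Rm p\<bar> \<le> M * \<bar>- (hh p / 2)\<bar> ^ 3" unfolding Rm_def using M i[OF p] t[OF p] by blast
    show "\<bar>- (hh p / 2)\<bar> \<le> hh p" using Adm_facts(1)[OF p] by simp
  qed
  have 1: "Big Adm (\<lambda>p. hh p ^ 2) (\<lambda>p. (Rp p + Rm p) * (1/2))"
    by (intro h3_h2 Big_mult_Bd Big_add bp bm Bd_const)
  have 2: "Big Adm (\<lambda>p. hh p ^ 2) (\<lambda>p. hh p ^ 2 * (Pxx (\<iota> p) (y p, \<tau> p) * (1/8)))"
    by (intro Big_mult_Bd Big_h2_self Bd_mult Bd_const BdA[OF OK_all(3)] i t)
  have "Big Adm (\<lambda>p. hh p ^ 2) (\<lambda>p. (Rp p + Rm p) * (1/2) + hh p ^ 2 * (Pxx (\<iota> p) (y p, \<tau> p) * (1/8)))"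
    by (rule Big_add[OF 1 2])
  then show ?thesis
    by (rule Big_cong) (simp add: Rp_def Rm_def field_simps power2_eq_square)
qed

end


context setting begin

lemma hatP_eq: "hatP P (hh p) (dd p) k j (ll p) =
   (P j (yy p - hh p / 2, real k * dd p) + P j (yy p + hh p / 2, real k * dd p)) / 2"
  by (simp add: hatP_def Pgrid_def yy_def xx_def algebra_simps)

lemma Vgrid_eq: "Vgrid V (hh p) (dd p) k j (ll p) = V j (yy p, real k * dd p)"
  by (simp add: Vgrid_def yy_def xx_def algebra_simps)

lemma t0_eq: "real (kk p) * dd p = t0 p" and t1_eq: "real (kk p + 1) * dd p = t1 p"
  by (simp_all add: t0_def t1_def)

lemma tau3_Big: "Big Adm gg (\<lambda>p. tau3 n P V (hh p) (dd p) (kk p) (ll p))"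
proof -
  have "Big Adm gg (\<lambda>p. (\<Sum>j<n. (P j (yy p - hh p / 2, t0 p) + P j (yy p + hh p / 2, t0 p)) / 2 * V j (yy p, t1 p))
      - (\<Sum>j<n. P j (yy p, t0 p) * V j (yy p, t0 p)))"
  proof (rule Big_sum_approx, simp)
    fix j assume j: "j \<in> {..<n}"
    then have j: "j < n" by simp
    show "Big Adm gg (\<lambda>p. (P j (yy p - hh p / 2, t0 p) + P j (yy p + hh p / 2, t0 p)) / 2 * V j (yy p, t1 p)
       - P j (yy p, t0 p) * V j (yy p, t0 p))"
    proof (rule Big_prod_approx)
      show "Big Adm gg (\<lambda>p. (P j (yy p - hh p / 2, t0 p) + P j (yy p + hh p / 2, t0 p)) / 2 - P j (yy p, t0 p))"
        using AVG[where \<iota> = "\<lambda>_. j" and \<tau> = t0 and y = yy] j Adm_facts by (intro h2_gg) auto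
      show "Big Adm gg (\<lambda>p. V j (yy p, t1 p) - V j (yy p, t0 p))"
        using Lip_Big[OF LipV, where \<iota> = "\<lambda>_. j" and \<xi> = yy] j by (intro dd_gg) auto
      show "Bd Adm (\<lambda>p. V j (yy p, t1 p))"
        using BdA[OF OK_all(8), where \<iota> = "\<lambda>_. j" and \<xi> = yy and \<tau> = t1] j Adm_facts by auto
      show "Bd Adm (\<lambda>p. P j (yy p, t0 p))"
        using BdA[OF OK_all(1), where \<iota> = "\<lambda>_. j" and \<xi> = yy and \<tau> = t0] j Adm_facts by auto
    qed
  qed
  then show ?thesis
  proof (rule Big_cong)
    fix p assume p: "p \<in> Adm"
    have "(\<Sum>j<n. P j (yy p, t0 p) * V j (yy p, t0 p)) = 0"
      using eq3 Adm_facts(5)[OF p] by (simp add: dom_T_def)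
    then show "(\<Sum>j<n. (P j (yy p - hh p / 2, t0 p) + P j (yy p + hh p / 2, t0 p)) / 2 * V j (yy p, t1 p))
      - (\<Sum>j<n. P j (yy p, t0 p) * V j (yy p, t0 p)) = tau3 n P V (hh p) (dd p) (kk p) (ll p)"
      by (simp add: tau3_def hatP_eq Vgrid_eq t0_def t1_def)
  qed
qed

end


context setting begin

lemma gg_Bd: "Big Adm gg E \<Longrightarrow> Bd Adm E"
proof (erule Big_mono[where c = "T + L^2"])
  fix p assume p: "p \<in> Adm"
  note f = Adm_facts[OF p]
  have "hh p ^ 2 \<le> L ^ 2" using f by (intro power_mono) auto
  then have "gg p \<le> T + L^2" unfolding gg_def using f(4) by linarith
  then show "0 \<le> gg p \<and> gg p \<le> (T + L^2) * 1" using gg_pos[OF p] by simp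
qed

lemma Bd_approx: "Big Adm gg (\<lambda>p. a p - c p) \<Longrightarrow> Bd Adm c \<Longrightarrow> Bd Adm a"
  using Bd_add[OF gg_Bd] by (metis (no_types, lifting) Big_cong diff_add_cancel)

lemma Big_factor: "Bd Adm f \<Longrightarrow> Big Adm g (\<lambda>p. a p - c p) \<Longrightarrow> Big Adm g (\<lambda>p. f p * a p - f p * c p)"
  using Bd_mult_Big[of Adm f g "\<lambda>p. a p - c p"] by (simp add: right_diff_distrib)

lemma Bd_b: "Bd Adm (\<lambda>p. b (ii p) j)"
proof (rule BdI[of _ _ "\<Sum>i<n. \<bar>b i j\<bar>"])
  fix p assume p: "p \<in> Adm"
  show "\<bar>b (ii p) j\<bar> \<le> (\<Sum>i<n. \<bar>b i j\<bar>)"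
    using Adm_facts(8)[OF p] by (intro member_le_sum) auto
qed

lemma DlogP_eq: "DlogP P (hh p) (dd p) (kk p) j (ll p) =
   (ln (P j (yy p + hh p / 2, t1 p)) - ln (P j (yy p - hh p / 2, t1 p))) / hh p"
  by (simp add: DlogP_def Pgrid_def yy_def xx_def t1_def algebra_simps)

lemma CD_lnP:
  assumes i: "\<And>p. p \<in> Adm \<Longrightarrow> \<iota> p < n" and t: "\<And>p. p \<in> Adm \<Longrightarrow> \<tau> p \<in> {0..T}"
  shows "Big Adm (\<lambda>p. hh p ^ 2) (\<lambda>p. (ln (P (\<iota> p) (y p + hh p / 2, \<tau> p)) - ln (P (\<iota> p) (y p - hh p / 2, \<tau> p))) / hh p
      - G (\<iota> p) (y p, \<tau> p))"
proof -
  obtain M where M0: "M \<ge> 0" and M: "\<forall>i<n. \<forall>t\<in>{0..T}. \<forall>x a.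
     \<bar>ln (P i (x + a, t)) - (ln (P i (x, t)) + a * G i (x, t) + a^2/2 * G2 i (x, t))\<bar> \<le> M * \<bar>a\<bar>^3"
    using TayL by blast
  define Rp where "Rp p = ln (P (\<iota> p) (y p + hh p / 2, \<tau> p)) - (ln (P (\<iota> p) (y p, \<tau> p)) + (hh p / 2) * G (\<iota> p) (y p, \<tau> p)
     + (hh p / 2)^2/2 * G2 (\<iota> p) (y p, \<tau> p))" for p
  define Rm where "Rm p = ln (P (\<iota> p) (y p + - (hh p / 2), \<tau> p)) - (ln (P (\<iota> p) (y p, \<tau> p)) + (- (hh p / 2)) * G (\<iota> p) (y p, \<tau> p)
     + (- (hh p / 2))^2/2 * G2 (\<iota> p) (y p, \<tau> p))" for p
  have bp: "Big Adm (\<lambda>p. hh p ^ 3) Rp"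
  proof (rule Tay_Big[OF M0, where a = "\<lambda>p. hh p / 2"])
    fix p assume p: "p \<in> Adm"
    show "\<bar>Rp p\<bar> \<le> M * \<bar>hh p / 2\<bar> ^ 3" unfolding Rp_def using M i[OF p] t[OF p] by blast
    show "\<bar>hh p / 2\<bar> \<le> hh p" using Adm_facts(1)[OF p] by simp
  qed
  have bm: "Big Adm (\<lambda>p. hh p ^ 3) Rm"
  proof (rule Tay_Big[OF M0, where a = "\<lambda>p. - (hh p / 2)"])
    fix p assume p: "p \<in> Adm"
    show "\<bar>Rm p\<bar> \<le> M * \<bar>- (hh p / 2)\<bar> ^ 3" unfolding Rm_def using M i[OF p] t[OF p] by blast
    show "\<bar>- (hh p / 2)\<bar> \<le> hh p" using Adm_facts(1)[OF p] by simp
  qed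
  have "Big Adm (\<lambda>p. hh p ^ 3) (\<lambda>p. Rp p - Rm p)" by (rule Big_diff[OF bp bm])
  then have "Big Adm (\<lambda>p. hh p ^ 2 * hh p) (\<lambda>p. Rp p - Rm p)"
    by (rule Big_mono[where c = 1]) (use Adm_facts in \<open>auto simp: power3_eq_cube power2_eq_square less_imp_le\<close>)
  then have "Big Adm (\<lambda>p. hh p ^ 2) (\<lambda>p. (Rp p - Rm p) / hh p)"
    by (rule Big_div) (use Adm_facts in auto)
  then show ?thesis
  proof (rule Big_cong)
    fix p assume p: "p \<in> Adm"
    have h: "hh p \<noteq> 0" using Adm_facts(1)[OF p] by simp
    show "(Rp p - Rm p) / hh p = (ln (P (\<iota> p) (y p + hh p / 2, \<tau> p)) - ln (P (\<iota> p) (y p - hh p / 2, \<tau> p))) / hh p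
      - G (\<iota> p) (y p, \<tau> p)"
      using h by (simp add: Rp_def Rm_def field_simps power2_eq_square)
  qed
qed

lemma G_time:
  assumes i: "\<And>p. p \<in> Adm \<Longrightarrow> \<iota> p < n"
  shows "Big Adm dd (\<lambda>p. G (\<iota> p) (\<xi> p, t1 p) - G (\<iota> p) (\<xi> p, t0 p))"
proof -
  have ne: "\<And>p. p \<in> Adm \<Longrightarrow> P (\<iota> p) (\<xi> p, t1 p) \<noteq> 0 \<and> P (\<iota> p) (\<xi> p, t0 p) \<noteq> 0"
    using Pne i Adm_facts by (auto simp: dom_T_def)
  have inv: "Big Adm dd (\<lambda>p. 1 / P (\<iota> p) (\<xi> p, t1 p) - 1 / P (\<iota> p) (\<xi> p, t0 p))"
  proof (rule Big_inverse_diff)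
    show "Big Adm dd (\<lambda>p. P (\<iota> p) (\<xi> p, t1 p) - P (\<iota> p) (\<xi> p, t0 p))" by (rule Lip_Big[OF LipP i])
    show "Bd Adm (\<lambda>p. 1 / P (\<iota> p) (\<xi> p, t1 p))"
      using BdA[OF OK_IP, of \<iota> t1 \<xi>] i Adm_facts by (auto simp: IP_def)
    show "Bd Adm (\<lambda>p. 1 / P (\<iota> p) (\<xi> p, t0 p))"
      using BdA[OF OK_IP, of \<iota> t0 \<xi>] i Adm_facts by (auto simp: IP_def)
  qed (rule ne)
  have "Big Adm dd (\<lambda>p. Px (\<iota> p) (\<xi> p, t1 p) * (1 / P (\<iota> p) (\<xi> p, t1 p)) - Px (\<iota> p) (\<xi> p, t0 p) * (1 / P (\<iota> p) (\<xi> p, t0 p)))"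
  proof (rule Big_prod_approx[OF Lip_Big[OF LipPx i] inv])
    show "Bd Adm (\<lambda>p. 1 / P (\<iota> p) (\<xi> p, t1 p))"
      using BdA[OF OK_IP, of \<iota> t1 \<xi>] i Adm_facts by (auto simp: IP_def)
    show "Bd Adm (\<lambda>p. Px (\<iota> p) (\<xi> p, t0 p))"
      using BdA[OF OK_all(2), of \<iota> t0 \<xi>] i Adm_facts by auto
  qed
  then show ?thesis by (rule Big_cong) (simp add: G_def)
qed

lemma DL_approx:
  assumes i: "\<And>p. p \<in> Adm \<Longrightarrow> \<iota> p < n"
  shows "Big Adm gg (\<lambda>p. DlogP P (hh p) (dd p) (kk p) (\<iota> p) (ll p) - G (\<iota> p) (yy p, t0 p))"
proof -
  have "Big Adm gg (\<lambda>p. ((ln (P (\<iota> p) (yy p + hh p / 2, t1 p)) - ln (P (\<iota> p) (yy p - hh p / 2, t1 p))) / hh p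
      - G (\<iota> p) (yy p, t1 p)) + (G (\<iota> p) (yy p, t1 p) - G (\<iota> p) (yy p, t0 p)))"
    by (intro Big_add h2_gg dd_gg CD_lnP G_time i) (use Adm_facts in auto)
  then show ?thesis by (rule Big_cong) (simp add: DlogP_eq)
qed

lemma AH_approx:
  assumes i: "\<And>p. p \<in> Adm \<Longrightarrow> \<iota> p < n"
  shows "Big Adm gg (\<lambda>p. hatP P (hh p) (dd p) (kk p) (\<iota> p) (ll p) - P (\<iota> p) (yy p, t0 p))"
proof -
  have "Big Adm gg (\<lambda>p. (P (\<iota> p) (yy p - hh p / 2, t0 p) + P (\<iota> p) (yy p + hh p / 2, t0 p)) / 2 - P (\<iota> p) (yy p, t0 p))"
    by (intro h2_gg AVG i) (use Adm_facts in auto)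
  then show ?thesis by (rule Big_cong) (simp add: hatP_eq t0_def)
qed

end


context setting begin

definition "SP z = (\<Sum>j<n. P j z)"

lemma SP_pos: "z \<in> S \<Longrightarrow> SP z > 0"
proof -
  assume z: "z \<in> S"
  have "0 \<in> {..<n}" using n by simp
  then have "{..<n} \<noteq> {}" by blast
  then show ?thesis unfolding SP_def using pos z by (intro sum_pos) auto
qed

lemma OK_ISP: "OK (\<lambda>_ z. 1 / SP z)"
  unfolding OK_def
proof (intro allI impI conjI)
  show "continuous_on S (\<lambda>z. 1 / SP z)"
    using P_facts(1) SP_pos unfolding SP_def
    by (intro continuous_intros) (auto simp: less_imp_neq[symmetric] dest: SP_pos[unfolded SP_def])
  show "x_periodic L (\<lambda>z. 1 / SP z)"
    using P_per(1) unfolding SP_def x_periodic_def by simp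
qed

lemma tau2_Big: "Big Adm gg (\<lambda>p. tau2 n b P V (hh p) (dd p) (kk p) (ii p) (ll p))"
proof -
  define Ah where "Ah j p = hatP P (hh p) (dd p) (kk p) j (ll p)" for j p
  define Dl where "Dl j p = DlogP P (hh p) (dd p) (kk p) j (ll p)" for j p
  define P0 where "P0 j p = P j (yy p, t0 p)" for j p
  define G0 where "G0 j p = G j (yy p, t0 p)" for j p
  define V0 where "V0 j p = V j (yy p, t0 p)" for j p
  define V1 where "V1 j p = V j (yy p, t1 p)" for j p
  have iA: "\<And>p. p \<in> Adm \<Longrightarrow> ii p < n" using Adm_facts by auto
  have AH: "Big Adm gg (\<lambda>p. Ah (\<iota> p) p - P0 (\<iota> p) p)" if "\<And>p. p \<in> Adm \<Longrightarrow> \<iota> p < n" for \<iota>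
    unfolding Ah_def P0_def by (rule AH_approx) (rule that)
  have DL: "Big Adm gg (\<lambda>p. Dl (\<iota> p) p - G0 (\<iota> p) p)" if "\<And>p. p \<in> Adm \<Longrightarrow> \<iota> p < n" for \<iota>
    unfolding Dl_def G0_def by (rule DL_approx) (rule that)
  have VV: "Big Adm gg (\<lambda>p. V1 (\<iota> p) p - V0 (\<iota> p) p)" if "\<And>p. p \<in> Adm \<Longrightarrow> \<iota> p < n" for \<iota>
    unfolding V1_def V0_def by (rule dd_gg, rule Lip_Big[OF LipV]) (rule that)
  have BP0: "Bd Adm (\<lambda>p. P0 (\<iota> p) p)" if "\<And>p. p \<in> Adm \<Longrightarrow> \<iota> p < n" for \<iota>
    unfolding P0_def by (rule BdA[OF OK_all(1)]) (use that Adm_facts in auto)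
  have BG0: "Bd Adm (\<lambda>p. G0 (\<iota> p) p)" if "\<And>p. p \<in> Adm \<Longrightarrow> \<iota> p < n" for \<iota>
    unfolding G0_def by (rule BdA[OF OK_G]) (use that Adm_facts in auto)
  have BV1: "Bd Adm (\<lambda>p. V1 (\<iota> p) p)" if "\<And>p. p \<in> Adm \<Longrightarrow> \<iota> p < n" for \<iota>
    unfolding V1_def by (rule BdA[OF OK_all(8)]) (use that Adm_facts in auto)
  have BDl: "Bd Adm (\<lambda>p. Dl (\<iota> p) p)" if "\<And>p. p \<in> Adm \<Longrightarrow> \<iota> p < n" for \<iota>
    by (rule Bd_approx[OF DL[OF that] BG0[OF that]])

  define X where "X p = (\<Sum>j<n. Ah j p * Dl j p)" for p
  define Y where "Y p = (\<Sum>j<n. P0 j p * G0 j p)" for p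
  have XY: "Big Adm gg (\<lambda>p. X p - Y p)"
    unfolding X_def Y_def
    by (rule Big_sum_approx, simp, rule Big_prod_approx[OF AH DL BDl BP0]) auto
  have BY: "Bd Adm Y"
    unfolding Y_def by (rule Bd_sum, simp, rule Bd_mult[OF BP0 BG0]) auto
  have BX: "Bd Adm X" by (rule Bd_approx[OF XY BY])

  define SA where "SA p = (\<Sum>j<n. Ah j p)" for p
  define SP0 where "SP0 p = (\<Sum>j<n. P0 j p)" for p
  have SAP: "Big Adm gg (\<lambda>p. SA p - SP0 p)"
    unfolding SA_def SP0_def by (rule Big_sum_approx, simp, rule AH) auto
  have BISP: "Bd Adm (\<lambda>p. 1 / SP0 p)"
  proof -
    have "Bd Adm (\<lambda>p. 1 / SP (yy p, t0 p))"
      using BdA[OF OK_ISP, of "\<lambda>_. 0" t0 yy] n Adm_facts by auto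
    then show ?thesis by (simp add: SP_def SP0_def P0_def)
  qed
  have SP0pos: "SP0 p > 0" if "p \<in> Adm" for p
    using SP_pos[of "(yy p, t0 p)"] Adm_facts[OF that] by (simp add: SP_def SP0_def P0_def dom_T_def)
  obtain B where B: "\<forall>i<n. \<forall>z\<in>S. \<bar>IP i z\<bar> \<le> B" using OK_bound[OF OK_IP] by blast
  have SAlow: "SA p \<ge> 1 / B \<and> B > 0" if p: "p \<in> Adm" for p
  proof -
    note f = Adm_facts[OF p]
    have n0: "0 < n" using n by simp
    have low: "P 0 z \<ge> 1 / B \<and> B > 0" if z: "z \<in> S" for z
    proof -
      have pz: "P 0 z > 0" using pos[OF n0 z] .
      have "\<bar>IP 0 z\<bar> \<le> B" using B n0 z by blast
      then have "1 / P 0 z \<le> B" using pz by (simp add: IP_def)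
      moreover have "0 < 1 / P 0 z" using pz by simp
      ultimately have Bp: "B > 0" by linarith
      have "1 / B \<le> P 0 z" using Bp \<open>1 / P 0 z \<le> B\<close> pz by (simp add: field_simps)
      then show ?thesis using Bp by simp
    qed
    have z1: "(yy p - hh p / 2, t0 p) \<in> S" and z2: "(yy p + hh p / 2, t0 p) \<in> S"
      using f by (auto simp: dom_T_def)
    have "Ah 0 p = (P 0 (yy p - hh p / 2, t0 p) + P 0 (yy p + hh p / 2, t0 p)) / 2"
      by (simp add: Ah_def hatP_eq t0_def)
    then have a0: "Ah 0 p \<ge> 1 / B" using low[OF z1] low[OF z2] by simp
    have nn: "\<forall>j\<in>{..<n}. 0 \<le> Ah j p"
    proof
      fix j assume "j \<in> {..<n}"
      then have j: "j < n" by simp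
      show "0 \<le> Ah j p" using pos[OF j z1] pos[OF j z2]
        by (simp add: Ah_def hatP_eq t0_def)
    qed
    have "Ah 0 p \<le> SA p" unfolding SA_def using n0 nn by (intro member_le_sum) auto
    then show ?thesis using a0 low[OF z1] by simp
  qed
  have BISA: "Bd Adm (\<lambda>p. 1 / SA p)"
  proof (rule BdI[of _ _ B])
    fix p assume p: "p \<in> Adm"
    have s: "SA p \<ge> 1 / B" "B > 0" using SAlow[OF p] by auto
    then have "SA p > 0" by (meson order.strict_trans1 zero_less_divide_1_iff order_less_le_trans)
    then show "\<bar>1 / SA p\<bar> \<le> B" using s by (simp add: field_simps)
  qed
  have SApos: "SA p > 0" if "p \<in> Adm" for p
    using SAlow[OF that] by (meson order_less_le_trans zero_less_divide_1_iff)
  have INV: "Big Adm gg (\<lambda>p. 1 / SA p - 1 / SP0 p)"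
    by (rule Big_inverse_diff[OF SAP BISA BISP]) (use SApos SP0pos in \<open>auto simp: less_imp_neq[symmetric]\<close>)
  have T2: "Big Adm gg (\<lambda>p. 1 / SA p * X p - 1 / SP0 p * Y p)"
    by (rule Big_prod_approx[OF INV XY BX BISP])

  define Z1 where "Z1 p = (\<Sum>j<n. b (ii p) j * Ah j p * (V1 (ii p) p - V1 j p))" for p
  define Z0 where "Z0 p = (\<Sum>j<n. b (ii p) j * P0 j p * (V0 (ii p) p - V0 j p))" for p
  have Z: "Big Adm gg (\<lambda>p. Z1 p - Z0 p)"
    unfolding Z1_def Z0_def
  proof (rule Big_sum_approx, simp)
    fix j assume "j \<in> {..<n}"
    then have j: "j < n" by simp
    show "Big Adm gg (\<lambda>p. b (ii p) j * Ah j p * (V1 (ii p) p - V1 j p) - b (ii p) j * P0 j p * (V0 (ii p) p - V0 j p))"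
    proof (rule Big_prod_approx)
      show "Big Adm gg (\<lambda>p. b (ii p) j * Ah j p - b (ii p) j * P0 j p)"
        by (rule Big_factor[OF Bd_b AH]) (rule j)
      have "Big Adm gg (\<lambda>p. (V1 (ii p) p - V0 (ii p) p) - (V1 j p - V0 j p))"
        by (rule Big_diff[OF VV VV]) (use iA j in auto)
      then show "Big Adm gg (\<lambda>p. (V1 (ii p) p - V1 j p) - (V0 (ii p) p - V0 j p))"
        by (rule Big_cong) simp
      show "Bd Adm (\<lambda>p. V1 (ii p) p - V1 j p)"
        by (rule Bd_diff[OF BV1 BV1]) (use iA j in auto)
      show "Bd Adm (\<lambda>p. b (ii p) j * P0 j p)"
        by (rule Bd_mult[OF Bd_b BP0]) (rule j)
    qed
  qed
  have "Big Adm gg (\<lambda>p. (Dl (ii p) p - G0 (ii p) p) - (1 / SA p * X p - 1 / SP0 p * Y p) + (Z1 p - Z0 p))"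
    by (intro Big_add Big_diff DL T2 Z iA)
  then show ?thesis
  proof (rule Big_cong)
    fix p assume p: "p \<in> Adm"
    note f = Adm_facts[OF p]
    have z: "(yy p, t0 p) \<in> S" using f by (simp add: dom_T_def)
    have e2: "- Z0 p = G0 (ii p) p - 1 / SP0 p * Y p"
      using eq2[OF f(8) z] ln_rule[OF _ z] f(8)
      by (simp add: Z0_def G0_def SP0_def Y_def P0_def V0_def)
    have tau: "tau2 n b P V (hh p) (dd p) (kk p) (ii p) (ll p) = Dl (ii p) p - 1 / SA p * X p + Z1 p"
      by (simp add: tau2_def Dl_def SA_def Ah_def X_def Z1_def V1_def Vgrid_eq t1_def)
    show "(Dl (ii p) p - G0 (ii p) p) - (1 / SA p * X p - 1 / SP0 p * Y p) + (Z1 p - Z0 p)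
        = tau2 n b P V (hh p) (dd p) (kk p) (ii p) (ll p)"
      unfolding tau using e2 by simp
  qed
qed

end


context setting begin

lemma grid_args:
  "real_of_int (ll p + 1) * hh p = xx p + hh p"
  "real_of_int (ll p - 1) * hh p = xx p + - hh p"
  "real_of_int (ll p) * hh p = xx p"
  "(real_of_int (ll p) + 1/2) * hh p = xx p + hh p / 2"
  "(real_of_int (ll p - 1) + 1/2) * hh p = xx p + - (hh p / 2)"
  by (simp_all add: xx_def algebra_simps)

lemma tau1_eq: "tau1 P V (hh p) (dd p) (kk p) (ii p) (ll p) =
   (P (ii p) (xx p, t1 p) - P (ii p) (xx p, t0 p)) / dd p
   + ((P (ii p) (xx p, t0 p) + P (ii p) (xx p + hh p, t0 p)) / 2 * V (ii p) (xx p + hh p / 2, t1 p)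
     - (P (ii p) (xx p + - hh p, t0 p) + P (ii p) (xx p, t0 p)) / 2 * V (ii p) (xx p + - (hh p / 2), t1 p)) / hh p"
  unfolding tau1_def hatP_def Pgrid_def Vgrid_def t0_def t1_def
  by (simp only: grid_args diff_add_cancel)

lemma tau1_Big: "Big Adm gg (\<lambda>p. tau1 P V (hh p) (dd p) (kk p) (ii p) (ll p))"
proof -
  have iA: "\<And>p. p \<in> Adm \<Longrightarrow> ii p < n" using Adm_facts by auto
  define x where "x = xx"
  define i where "i = ii"
  define P0 where "P0 p = P (i p) (x p, t0 p)" for p
  define P1 where "P1 p = Px (i p) (x p, t0 p)" for p
  define P2 where "P2 p = Pxx (i p) (x p, t0 p)" for p
  define V0 where "V0 p = V (i p) (x p, t1 p)" for p
  define V1 where "V1 p = Vx (i p) (x p, t1 p)" for p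
  define V2 where "V2 p = Vxx (i p) (x p, t1 p)" for p
  define vp where "vp p = V (i p) (x p + hh p / 2, t1 p)" for p
  define vm where "vm p = V (i p) (x p + - (hh p / 2), t1 p)" for p
  define rp where "rp p = P (i p) (x p + hh p, t0 p) - (P0 p + hh p * P1 p + (hh p)^2/2 * P2 p)" for p
  define rm where "rm p = P (i p) (x p + - hh p, t0 p) - (P0 p + (- hh p) * P1 p + (- hh p)^2/2 * P2 p)" for p
  define sp where "sp p = vp p - (V0 p + (hh p / 2) * V1 p + (hh p / 2)^2/2 * V2 p)" for p
  define sm where "sm p = vm p - (V0 p + (- (hh p / 2)) * V1 p + (- (hh p / 2))^2/2 * V2 p)" for p
  have iA': "\<And>p. p \<in> Adm \<Longrightarrow> i p < n" using iA by (simp add: i_def)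
  obtain MP where MP0: "MP \<ge> 0" and MP: "\<forall>i<n. \<forall>t\<in>{0..T}. \<forall>x a.
     \<bar>P i (x + a, t) - (P i (x, t) + a * Px i (x, t) + a^2/2 * Pxx i (x, t))\<bar> \<le> MP * \<bar>a\<bar>^3"
    using TayP by blast
  obtain MV where MV0: "MV \<ge> 0" and MV: "\<forall>i<n. \<forall>t\<in>{0..T}. \<forall>x a.
     \<bar>V i (x + a, t) - (V i (x, t) + a * Vx i (x, t) + a^2/2 * Vxx i (x, t))\<bar> \<le> MV * \<bar>a\<bar>^3"
    using TayV by blast
  have brp: "Big Adm (\<lambda>p. hh p ^ 3) rp"
  proof (rule Tay_Big[OF MP0, where a = "\<lambda>p. hh p"])
    fix p assume p: "p \<in> Adm"
    show "\<bar>rp p\<bar> \<le> MP * \<bar>hh p\<bar> ^ 3" unfolding rp_def P0_def P1_def P2_def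
      using MP iA'[OF p] Adm_facts(5)[OF p] by blast
    show "\<bar>hh p\<bar> \<le> hh p" using Adm_facts(1)[OF p] by simp
  qed
  have brm: "Big Adm (\<lambda>p. hh p ^ 3) rm"
  proof (rule Tay_Big[OF MP0, where a = "\<lambda>p. - hh p"])
    fix p assume p: "p \<in> Adm"
    show "\<bar>rm p\<bar> \<le> MP * \<bar>- hh p\<bar> ^ 3" unfolding rm_def P0_def P1_def P2_def
      using MP iA'[OF p] Adm_facts(5)[OF p] by blast
    show "\<bar>- hh p\<bar> \<le> hh p" using Adm_facts(1)[OF p] by simp
  qed
  have bsp: "Big Adm (\<lambda>p. hh p ^ 3) sp"
  proof (rule Tay_Big[OF MV0, where a = "\<lambda>p. hh p / 2"])
    fix p assume p: "p \<in> Adm"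
    show "\<bar>sp p\<bar> \<le> MV * \<bar>hh p / 2\<bar> ^ 3" unfolding sp_def V0_def V1_def V2_def vp_def
      using MV iA'[OF p] Adm_facts(6)[OF p] by blast
    show "\<bar>hh p / 2\<bar> \<le> hh p" using Adm_facts(1)[OF p] by simp
  qed
  have bsm: "Big Adm (\<lambda>p. hh p ^ 3) sm"
  proof (rule Tay_Big[OF MV0, where a = "\<lambda>p. - (hh p / 2)"])
    fix p assume p: "p \<in> Adm"
    show "\<bar>sm p\<bar> \<le> MV * \<bar>- (hh p / 2)\<bar> ^ 3" unfolding sm_def V0_def V1_def V2_def vm_def
      using MV iA'[OF p] Adm_facts(6)[OF p] by blast
    show "\<bar>- (hh p / 2)\<bar> \<le> hh p" using Adm_facts(1)[OF p] by simp
  qed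
  have t0A: "\<And>p. p \<in> Adm \<Longrightarrow> t0 p \<in> {0..T}" and t1A: "\<And>p. p \<in> Adm \<Longrightarrow> t1 p \<in> {0..T}"
    using Adm_facts by auto
  have BP0: "Bd Adm P0" unfolding P0_def by (rule BdA[OF OK_all(1) iA' t0A])
  have BP1: "Bd Adm P1" unfolding P1_def by (rule BdA[OF OK_all(2) iA' t0A])
  have BP2: "Bd Adm P2" unfolding P2_def by (rule BdA[OF OK_all(3) iA' t0A])
  have BV0: "Bd Adm V0" unfolding V0_def by (rule BdA[OF OK_all(8) iA' t1A])
  have BV1: "Bd Adm V1" unfolding V1_def by (rule BdA[OF OK_all(9) iA' t1A])
  have BV2: "Bd Adm V2" unfolding V2_def by (rule BdA[OF OK_all(10) iA' t1A])
  have Bvp: "Bd Adm vp" unfolding vp_def by (rule BdA[OF OK_all(8) iA' t1A])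
  have Bvm: "Bd Adm vm" unfolding vm_def by (rule BdA[OF OK_all(8) iA' t1A])
  have Bh2: "Bd Adm (\<lambda>p. hh p / 2)"
  proof (rule BdI[of _ _ L])
    fix p assume p: "p \<in> Adm"
    show "\<bar>hh p / 2\<bar> \<le> L" using Adm_facts(1,2)[OF p] by simp
  qed
  have Bh22: "Bd Adm (\<lambda>p. (hh p / 2)^2)" using Bd_mult[OF Bh2 Bh2] by (simp add: power2_eq_square)
  have Bal: "Bd Adm (\<lambda>p. P0 p + (hh p / 2)^2 * P2 p + (hh p / 2) * P1 p)"
    by (intro Bd_add Bd_mult BP0 BP1 BP2 Bh2 Bh22)
  have Bam: "Bd Adm (\<lambda>p. P0 p + (hh p / 2)^2 * P2 p - (hh p / 2) * P1 p)"
    by (intro Bd_add Bd_diff Bd_mult BP0 BP1 BP2 Bh2 Bh22)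
  define E where "E p = hh p ^ 3 * ((P2 p * V1 p + P1 p * V2 p / 2) / 4)
     + (P0 p + (hh p / 2)^2 * P2 p + (hh p / 2) * P1 p) * sp p
     - (P0 p + (hh p / 2)^2 * P2 p - (hh p / 2) * P1 p) * sm p
     + rp p * (vp p / 2) - rm p * (vm p / 2)" for p
  have Bdc: "Bd Adm (\<lambda>p. f p / c)" if "Bd Adm f" for f and c :: real
    using Bd_mult[OF that Bd_const[of Adm "1/c"]] by simp
  have q1: "Bd Adm (\<lambda>p. (P2 p * V1 p + P1 p * V2 p / 2) / 4)"
    by (intro Bdc Bd_add Bd_mult BP1 BP2 BV1 BV2)
  have t1: "Big Adm (\<lambda>p. hh p ^ 3) (\<lambda>p. hh p ^ 3 * ((P2 p * V1 p + P1 p * V2 p / 2) / 4))"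
    by (rule Big_mult_Bd[OF Big_h3_self q1])
  have t2: "Big Adm (\<lambda>p. hh p ^ 3) (\<lambda>p. (P0 p + (hh p / 2)^2 * P2 p + (hh p / 2) * P1 p) * sp p)"
    by (rule Bd_mult_Big[OF Bal bsp])
  have t3: "Big Adm (\<lambda>p. hh p ^ 3) (\<lambda>p. (P0 p + (hh p / 2)^2 * P2 p - (hh p / 2) * P1 p) * sm p)"
    by (rule Bd_mult_Big[OF Bam bsm])
  have t4: "Big Adm (\<lambda>p. hh p ^ 3) (\<lambda>p. rp p * (vp p / 2))"
    by (rule Big_mult_Bd[OF brp Bdc[OF Bvp]])
  have t5: "Big Adm (\<lambda>p. hh p ^ 3) (\<lambda>p. rm p * (vm p / 2))"
    by (rule Big_mult_Bd[OF brm Bdc[OF Bvm]])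
  have BE: "Big Adm (\<lambda>p. hh p ^ 3) E"
    unfolding E_def by (rule Big_diff[OF Big_add[OF Big_diff[OF Big_add[OF t1 t2] t3] t4] t5])
  have "Big Adm (\<lambda>p. hh p ^ 2 * hh p) E"
    by (rule Big_mono[OF BE, where c = 1]) (use Adm_facts in \<open>auto simp: power3_eq_cube power2_eq_square less_imp_le\<close>)
  then have SPB: "Big Adm gg (\<lambda>p. E p / hh p)"
    by (intro h2_gg Big_div) (use Adm_facts in auto)
  obtain M2 where M2: "\<forall>i<n. \<forall>x t0 t1. 0 \<le> t0 \<longrightarrow> t0 \<le> t1 \<longrightarrow> t1 \<le> T \<longrightarrow>
     \<bar>P i (x, t1) - P i (x, t0) - (t1 - t0) * Pt i (x, t0)\<bar> \<le> M2 * (t1 - t0)^2"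
    using time2_P by blast
  have "Big Adm (\<lambda>p. dd p * dd p) (\<lambda>p. P (i p) (x p, t1 p) - P (i p) (x p, t0 p) - dd p * Pt (i p) (x p, t0 p))"
  proof (rule BigI[of _ _ M2])
    fix p assume p: "p \<in> Adm"
    note f = Adm_facts[OF p]
    have "\<bar>P (i p) (x p, t1 p) - P (i p) (x p, t0 p) - (t1 p - t0 p) * Pt (i p) (x p, t0 p)\<bar> \<le> M2 * (t1 p - t0 p)^2"
      using M2 iA'[OF p] f(6,9,10) by simp
    then show "\<bar>P (i p) (x p, t1 p) - P (i p) (x p, t0 p) - dd p * Pt (i p) (x p, t0 p)\<bar> \<le> M2 * (dd p * dd p)"
      using f(7) by (simp add: power2_eq_square)
  qed
  then have TB: "Big Adm gg (\<lambda>p. (P (i p) (x p, t1 p) - P (i p) (x p, t0 p) - dd p * Pt (i p) (x p, t0 p)) / dd p)"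
    by (intro dd_gg Big_div) (use Adm_facts in auto)
  have LV: "Big Adm gg (\<lambda>p. V (i p) (x p, t1 p) - V (i p) (x p, t0 p))"
    by (intro dd_gg Lip_Big[OF LipV] iA')
  have LVx: "Big Adm gg (\<lambda>p. Vx (i p) (x p, t1 p) - Vx (i p) (x p, t0 p))"
    by (intro dd_gg Lip_Big[OF LipVx] iA')
  have "Big Adm gg (\<lambda>p. (P (i p) (x p, t1 p) - P (i p) (x p, t0 p) - dd p * Pt (i p) (x p, t0 p)) / dd p
      + E p / hh p + P0 p * (Vx (i p) (x p, t1 p) - Vx (i p) (x p, t0 p)) + P1 p * (V (i p) (x p, t1 p) - V (i p) (x p, t0 p)))"
    by (intro Big_add TB SPB Bd_mult_Big BP0 BP1 LV LVx)
  then show ?thesis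
  proof (rule Big_cong)
    fix p assume p: "p \<in> Adm"
    note f = Adm_facts[OF p]
    have z: "(x p, t0 p) \<in> S" using f by (simp add: dom_T_def)
    have e1: "Pt (i p) (x p, t0 p) + (P (i p) (x p, t0 p) * Vx (i p) (x p, t0 p) + V (i p) (x p, t0 p) * Px (i p) (x p, t0 p)) = 0"
      using eq1[OF iA'[OF p] z] prod_rule[OF iA'[OF p] z] by (simp add: Pt_def)
    have h: "hh p \<noteq> 0" and d: "dd p \<noteq> 0" using f by auto
    have sp_id: "(P0 p + P (i p) (x p + hh p, t0 p)) / 2 * vp p - (P (i p) (x p + - hh p, t0 p) + P0 p) / 2 * vm p
        = hh p * (P0 p * V1 p + P1 p * V0 p) + E p"
      unfolding E_def rp_def rm_def sp_def sm_def by (simp add: field_simps power2_eq_square power3_eq_cube)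
    have "tau1 P V (hh p) (dd p) (kk p) (ii p) (ll p) =
       (P (i p) (x p, t1 p) - P (i p) (x p, t0 p)) / dd p + (hh p * (P0 p * V1 p + P1 p * V0 p) + E p) / hh p"
      unfolding tau1_eq sp_id[symmetric] by (simp add: P0_def vp_def vm_def x_def i_def)
    also have "\<dots> = (P (i p) (x p, t1 p) - P (i p) (x p, t0 p) - dd p * Pt (i p) (x p, t0 p)) / dd p
      + E p / hh p + P0 p * (Vx (i p) (x p, t1 p) - Vx (i p) (x p, t0 p)) + P1 p * (V (i p) (x p, t1 p) - V (i p) (x p, t0 p))
      + (Pt (i p) (x p, t0 p) + (P (i p) (x p, t0 p) * Vx (i p) (x p, t0 p) + V (i p) (x p, t0 p) * Px (i p) (x p, t0 p)))"
      using h d by (simp add: field_simps P0_def P1_def V0_def V1_def)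
    finally show "(P (i p) (x p, t1 p) - P (i p) (x p, t0 p) - dd p * Pt (i p) (x p, t0 p)) / dd p
      + E p / hh p + P0 p * (Vx (i p) (x p, t1 p) - Vx (i p) (x p, t0 p)) + P1 p * (V (i p) (x p, t1 p) - V (i p) (x p, t0 p))
      = tau1 P V (hh p) (dd p) (kk p) (ii p) (ll p)"
      using e1 by simp
  qed
qed

end


theorem lemma2p5:
  fixes n :: nat and L T :: real and b :: "nat \<Rightarrow> nat \<Rightarrow> real"
    and P V :: "nat \<Rightarrow> real \<times> real \<Rightarrow> real"
  assumes n: "n \<ge> 2" and L: "L > 0" and T: "T > 0"
    and reg: "\<And>i. i < n \<Longrightarrow> Ck_on 3 (dom_T T) (P i) \<and> Ck_on 3 (dom_T T) (V i)"
    and per: "\<And>i. i < n \<Longrightarrow> x_periodic L (P i) \<and> x_periodic L (V i)"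
    and pos: "\<And>i z. i < n \<Longrightarrow> z \<in> dom_T T \<Longrightarrow> P i z > 0"
    and eq1: "\<And>i z. i < n \<Longrightarrow> z \<in> dom_T T \<Longrightarrow>
       pdt (dom_T T) (P i) z + pdx (dom_T T) (\<lambda>w. P i w * V i w) z = 0"
    and eq2: "\<And>i z. i < n \<Longrightarrow> z \<in> dom_T T \<Longrightarrow>
       - (\<Sum>j<n. b i j * P j z * (V i z - V j z))
         = pdx (dom_T T) (\<lambda>w. ln (P i w)) z
           - (1 / (\<Sum>j<n. P j z)) * (\<Sum>j<n. P j z * pdx (dom_T T) (\<lambda>w. ln (P j w)) z)"
    and eq3: "\<And>z. z \<in> dom_T T \<Longrightarrow> (\<Sum>j<n. P j z * V j z) = 0"
    and init: "\<And>x. (\<Sum>j<n. P j (x, 0)) = 1"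
  shows "\<exists>C>0. \<forall>(N::nat) dt (k::nat) i (l::int).
           N \<ge> 1 \<longrightarrow> dt > 0 \<longrightarrow> real (k + 1) * dt \<le> T \<longrightarrow> i < n \<longrightarrow>
           (let h = L / real N in
              \<bar>tau1 P V h dt k i l\<bar> \<le> C * (dt + h^2)
            \<and> \<bar>tau2 n b P V h dt k i l\<bar> \<le> C * (dt + h^2)
            \<and> \<bar>tau3 n P V h dt k l\<bar> \<le> C * (dt + h^2))"
proof -
  interpret S: setting n L T b P V
    by unfold_locales (fact n L T reg per pos eq1 eq2 eq3)+
  obtain C1 where C1: "\<forall>p\<in>S.Adm. \<bar>tau1 P V (S.hh p) (S.dd p) (S.kk p) (S.ii p) (S.ll p)\<bar> \<le> C1 * S.gg p"
    using S.tau1_Big unfolding Big_def by blast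
  obtain C2 where C2: "\<forall>p\<in>S.Adm. \<bar>tau2 n b P V (S.hh p) (S.dd p) (S.kk p) (S.ii p) (S.ll p)\<bar> \<le> C2 * S.gg p"
    using S.tau2_Big unfolding Big_def by blast
  obtain C3 where C3: "\<forall>p\<in>S.Adm. \<bar>tau3 n P V (S.hh p) (S.dd p) (S.kk p) (S.ll p)\<bar> \<le> C3 * S.gg p"
    using S.tau3_Big unfolding Big_def by blast
  define C where "C = max 1 (max C1 (max C2 C3))"
  show ?thesis
  proof (intro exI[of _ C] conjI allI impI)
    show "0 < C" by (simp add: C_def)
    fix N :: nat and dt :: real and k :: nat and i :: nat and l :: int
    assume N: "1 \<le> N" and dt: "0 < dt" and kT: "real (k + 1) * dt \<le> T" and i: "i < n"
    define p where "p = (N, dt, k, i, l)"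
    have pA: "p \<in> S.Adm" using N dt kT i by (simp add: p_def S.Adm_def)
    have e: "S.hh p = L / real N" "S.dd p = dt" "S.kk p = k" "S.ii p = i" "S.ll p = l"
      by (simp_all add: p_def S.hh_def S.dd_def S.kk_def S.ii_def S.ll_def)
    have g: "S.gg p = dt + (L / real N)^2" by (simp add: S.gg_def e)
    have gp: "0 \<le> S.gg p" using S.gg_pos[OF pA] by simp
    have m1: "C1 * S.gg p \<le> C * S.gg p" and m2: "C2 * S.gg p \<le> C * S.gg p" and m3: "C3 * S.gg p \<le> C * S.gg p"
      using gp by (intro mult_right_mono; simp add: C_def)+
    show "let h = L / real N in
              \<bar>tau1 P V h dt k i l\<bar> \<le> C * (dt + h^2)
            \<and> \<bar>tau2 n b P V h dt k i l\<bar> \<le> C * (dt + h^2)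
            \<and> \<bar>tau3 n P V h dt k l\<bar> \<le> C * (dt + h^2)"
      unfolding Let_def using C1[rule_format, OF pA] C2[rule_format, OF pA] C3[rule_format, OF pA] m1 m2 m3
      unfolding e g by linarith
  qed
qed


end
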